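(* Let $G$ be a finite group, $\pi$ a real representation of $G$, and $\pi'=\pi\oplus\det\pi$, where $\det\pi=\det\circ\pi$ is regarded as a one-dimensional real representation. Then $\pi$ is spinorial if and only if $\pi'$ is spinorial.
   Context: A real representation on a Euclidean space $V$ is regarded as a homomorphism $\pi:G\to\mathrm{O}(V)$; it is spinorial if there is a homomorphism $\hat\pi:G\to\mathrm{Pin}(V)$ with $\rho\circ\hat\pi=\pi$, where $\mathrm{Pin}(V)$ is the Pin group of $V$ (from the Clifford algebra with $v^2=-|v|^2$) and $\rho:\mathrm{Pin}(V)\to\mathrm{O}(V)$ the standard double cover with kernel $\{\pm1\}$. *)

theory Defs
  imports "HOL-Algebra.Group" "Jordan_Normal_Form.Determinant"
begin

definition orth_mat :: "nat \<Rightarrow> real mat \<Rightarrow> bool" where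
  "orth_mat n A \<longleftrightarrow> A \<in> carrier_mat n n \<and> transpose_mat A * A = 1\<^sub>m n"

definition orth_rep :: "('g, 'b) monoid_scheme \<Rightarrow> nat \<Rightarrow> ('g \<Rightarrow> real mat) \<Rightarrow> bool" where
  "orth_rep G n \<pi> \<longleftrightarrow>
     (\<forall>g\<in>carrier G. orth_mat n (\<pi> g)) \<and>
     (\<forall>g\<in>carrier G. \<forall>h\<in>carrier G. \<pi> (g \<otimes>\<^bsub>G\<^esub> h) = \<pi> g * \<pi> h)"

text \<open>Elements are coefficient functions on basis blades e_A, A a subset of {0..<n}
  (e_A = e_{a1} ... e_{ak} with a1 < ... < ak). With e_i e_j = - e_j e_i (i \<noteq> j) and
  e_i^2 = -1 one gets e_A e_B = (-1)^(#inversions + |A \<inter> B|) e_(A \<triangle> B).\<close>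

type_synonym cl = "nat set \<Rightarrow> real"

definition cl_sign :: "nat set \<Rightarrow> nat set \<Rightarrow> real" where
  "cl_sign A B = (-1) ^ (card {(a, b). a \<in> A \<and> b \<in> B \<and> b < a} + card (A \<inter> B))"

definition cl_mult :: "nat \<Rightarrow> cl \<Rightarrow> cl \<Rightarrow> cl" where
  "cl_mult n x y = (\<lambda>C. \<Sum>A\<in>Pow {..<n}. \<Sum>B\<in>Pow {..<n}.
      if (A - B) \<union> (B - A) = C then cl_sign A B * x A * y B else 0)"

definition cl_one :: cl where
  "cl_one = (\<lambda>A. if A = {} then 1 else 0)"

definition cl_vec :: "nat \<Rightarrow> real vec \<Rightarrow> cl" where
  "cl_vec n v = (\<lambda>A. if \<exists>i<n. A = {i} then v $ (THE i. A = {i}) else 0)"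

definition cl_alpha :: "cl \<Rightarrow> cl" where
  "cl_alpha x = (\<lambda>A. (-1) ^ card A * x A)"

text \<open>Pin(n): the subgroup of the units of Cl(R^n) generated by the unit vectors
  (finite products of unit vectors; closed under inverses since u^{-1} = -u).\<close>

inductive_set pin :: "nat \<Rightarrow> cl set" for n where
  pin_one: "cl_one \<in> pin n"
| pin_step: "x \<in> pin n \<Longrightarrow> v \<in> carrier_vec n \<Longrightarrow> v \<bullet> v = 1 \<Longrightarrow> cl_mult n x (cl_vec n v) \<in> pin n"

text \<open>rho : Pin(n) -> O(n), rho(x) v = alpha(x) v x^{-1}, i.e. the matrix A with
  alpha(x) v = (A v) x for all v (twisted adjoint action; unit vectors act by reflections,
  and ker rho = {1,-1}).\<close>

definition pin_rho :: "nat \<Rightarrow> cl \<Rightarrow> real mat" where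
  "pin_rho n x = (THE A. A \<in> carrier_mat n n \<and>
      (\<forall>v\<in>carrier_vec n. cl_mult n (cl_alpha x) (cl_vec n v) = cl_mult n (cl_vec n (A *\<^sub>v v)) x))"

definition spinorial :: "('g, 'b) monoid_scheme \<Rightarrow> nat \<Rightarrow> ('g \<Rightarrow> real mat) \<Rightarrow> bool" where
  "spinorial G n \<pi> \<longleftrightarrow>
     (\<exists>\<pi>h :: 'g \<Rightarrow> cl.
        (\<forall>g\<in>carrier G. \<pi>h g \<in> pin n \<and> pin_rho n (\<pi>h g) = \<pi> g) \<and>
        (\<forall>g\<in>carrier G. \<forall>h\<in>carrier G. \<pi>h (g \<otimes>\<^bsub>G\<^esub> h) = cl_mult n (\<pi>h g) (\<pi>h h)))"

definition det_sum :: "nat \<Rightarrow> ('g \<Rightarrow> real mat) \<Rightarrow> 'g \<Rightarrow> real mat" where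
  "det_sum n \<pi> g = four_block_mat (\<pi> g) (0\<^sub>m n 1) (0\<^sub>m 1 n) (mat 1 1 (\<lambda>_. det (\<pi> g)))"

end

theory Submission
  imports Defs
begin


abbreviation sd :: "'a set \<Rightarrow> 'a set \<Rightarrow> 'a set" where "sd A B \<equiv> (A - B) \<union> (B - A)"

definition ipairs :: "nat set \<Rightarrow> nat set \<Rightarrow> (nat \<times> nat) set" where
  "ipairs A B = {(a, b). a \<in> A \<and> b \<in> B \<and> b < a}"
definition iv :: "nat set \<Rightarrow> nat set \<Rightarrow> real" where "iv A B = (-1) ^ card (ipairs A B)"
definition it :: "nat set \<Rightarrow> nat set \<Rightarrow> real" where "it A B = (-1) ^ card (A \<inter> B)"
definition pc :: "nat set \<Rightarrow> real" where "pc A = (-1) ^ card A"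

lemma cl_sign_eq: "cl_sign A B = iv A B * it A B"
  unfolding cl_sign_def iv_def it_def ipairs_def by (simp add: power_add)

lemma card_sd_parity:
  assumes "finite X" "finite Y"
  shows "(-1::real) ^ card (sd X Y) = (-1) ^ card X * (-1) ^ card Y"
proof -
  have a: "card X = card (X - Y) + card (X \<inter> Y)"
    using assms by (metis Diff_Diff_Int Diff_subset card_Diff_subset card_mono add.commute inf.cobounded1 le_add_diff_inverse finite_Diff)
  have b: "card Y = card (Y - X) + card (X \<inter> Y)"
    using assms by (metis Diff_Diff_Int Diff_subset card_Diff_subset card_mono add.commute inf.cobounded2 le_add_diff_inverse finite_Diff Int_commute)
  have c: "card (sd X Y) = card (X - Y) + card (Y - X)"
    using assms by (subst card_Un_disjoint) auto
  have d: "((-1::real) ^ card (X \<inter> Y)) * ((-1) ^ card (X \<inter> Y)) = 1"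
    by (simp flip: power_add)
  show ?thesis unfolding a b c power_add
    using d by (simp add: algebra_simps)
qed

lemma pm1_sq: "((-1::real) ^ k) * ((-1) ^ k) = 1"
  by (simp flip: power_add)

lemma iv_sq: "iv A B * iv A B = 1" unfolding iv_def by (rule pm1_sq)
lemma it_sq: "it A B * it A B = 1" unfolding it_def by (rule pm1_sq)
lemma pc_sq: "pc A * pc A = 1" unfolding pc_def by (rule pm1_sq)
lemma it_comm: "it A B = it B A" unfolding it_def by (simp add: Int_commute)

lemma pc_sd: "finite A \<Longrightarrow> finite B \<Longrightarrow> pc (sd A B) = pc A * pc B"
  unfolding pc_def by (rule card_sd_parity)

lemma ipairs_sd1: "ipairs (sd A B) C = sd (ipairs A C) (ipairs B C)"
  unfolding ipairs_def by auto
lemma ipairs_sd2: "ipairs A (sd B C) = sd (ipairs A B) (ipairs A C)"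
  unfolding ipairs_def by auto
lemma finite_ipairs: "finite A \<Longrightarrow> finite B \<Longrightarrow> finite (ipairs A B)"
  unfolding ipairs_def by (rule finite_subset[of _ "A \<times> B"]) auto

lemma iv_sd1: "finite A \<Longrightarrow> finite B \<Longrightarrow> finite C \<Longrightarrow> iv (sd A B) C = iv A C * iv B C"
  unfolding iv_def ipairs_sd1 by (rule card_sd_parity) (auto intro: finite_ipairs)
lemma iv_sd2: "finite A \<Longrightarrow> finite B \<Longrightarrow> finite C \<Longrightarrow> iv A (sd B C) = iv A B * iv A C"
  unfolding iv_def ipairs_sd2 by (rule card_sd_parity) (auto intro: finite_ipairs)
lemma it_sd1: "finite A \<Longrightarrow> finite B \<Longrightarrow> it (sd A B) C = it A C * it B C"
proof -
  assume "finite A" "finite B"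
  have "sd A B \<inter> C = sd (A \<inter> C) (B \<inter> C)" by auto
  thus ?thesis unfolding it_def using \<open>finite A\<close> \<open>finite B\<close> by (simp add: card_sd_parity)
qed
lemma it_sd2: "finite B \<Longrightarrow> finite C \<Longrightarrow> it A (sd B C) = it A B * it A C"
  using it_sd1[of B C A] by (simp add: it_comm)

lemma sg_sd1: "finite A \<Longrightarrow> finite B \<Longrightarrow> finite C \<Longrightarrow> cl_sign (sd A B) C = cl_sign A C * cl_sign B C"
  by (simp add: cl_sign_eq iv_sd1 it_sd1)
lemma sg_sd2: "finite A \<Longrightarrow> finite B \<Longrightarrow> finite C \<Longrightarrow> cl_sign A (sd B C) = cl_sign A B * cl_sign A C"
  by (simp add: cl_sign_eq iv_sd2 it_sd2)
lemma sg_sq: "cl_sign A B * cl_sign A B = 1"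
  unfolding cl_sign_eq using iv_sq[of A B] it_sq[of A B] by (simp add: algebra_simps)

lemma cocycle:
  assumes "finite A" "finite C" "finite D"
  shows "cl_sign C (sd C D) * cl_sign A (sd A C) = cl_sign A (sd A D) * cl_sign (sd A C) (sd C D)"
proof -
  note f = assms finite_Un finite_Diff
  have e1: "cl_sign C (sd C D) = cl_sign C C * cl_sign C D" using f by (simp add: sg_sd2)
  have e2: "cl_sign A (sd A C) = cl_sign A A * cl_sign A C" using f by (simp add: sg_sd2)
  have e3: "cl_sign A (sd A D) = cl_sign A A * cl_sign A D" using f by (simp add: sg_sd2)
  have e4: "cl_sign (sd A C) (sd C D) = cl_sign A C * cl_sign A D * cl_sign C C * cl_sign C D"
    using f by (simp add: sg_sd1 sg_sd2 algebra_simps)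
  show ?thesis unfolding e1 e2 e3 e4
    using sg_sq[of A D] by (simp add: algebra_simps)
qed

definition tau :: "nat set \<Rightarrow> real" where "tau A = iv A A * pc A"

lemma tau_sd:
  assumes "finite A" "finite B"
  shows "tau (sd A B) * cl_sign A B = cl_sign B A * tau A * tau B"
proof -
  have "tau (sd A B) = iv A A * iv A B * iv B A * iv B B * pc A * pc B"
    unfolding tau_def using assms by (simp add: iv_sd1 iv_sd2 pc_sd algebra_simps)
  thus ?thesis unfolding tau_def cl_sign_eq using iv_sq[of A B]
    by (simp add: it_comm[of A B] algebra_simps)
qed



definition supp :: "nat \<Rightarrow> cl \<Rightarrow> bool" where
  "supp m x \<longleftrightarrow> (\<forall>A. \<not> A \<subseteq> {..<m} \<longrightarrow> x A = 0)"
definition dl :: "nat set \<Rightarrow> cl" where "dl B = (\<lambda>A. if A = B then 1 else 0)"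
definition csm :: "real \<Rightarrow> cl \<Rightarrow> cl" where "csm c x = (\<lambda>A. c * x A)"
definition cadd :: "cl \<Rightarrow> cl \<Rightarrow> cl" where "cadd x y = (\<lambda>A. x A + y A)"

lemma sd_eq_iff: "(sd A B = C) = (B = sd A C)" by blast
lemma sd_eq_iff2: "(sd A B = C) = (A = sd C B)" by blast
lemma sd_inv1[simp]: "sd (sd a C) C = a" by blast
lemma sd_inv2[simp]: "sd C (sd C a) = a" by blast
lemma sd_sub: "A \<subseteq> U \<Longrightarrow> B \<subseteq> U \<Longrightarrow> sd A B \<subseteq> U" by blast
lemma sd_sub_iff: "A \<subseteq> U \<Longrightarrow> (sd A B \<subseteq> U) = (B \<subseteq> U)" by blast

lemma mult_eq: "cl_mult m x y C = (if C \<subseteq> {..<m} then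
   (\<Sum>A\<in>Pow {..<m}. cl_sign A (sd A C) * x A * y (sd A C)) else 0)"
proof -
  have inner: "(\<Sum>B\<in>Pow {..<m}. if sd A B = C then cl_sign A B * x A * y B else 0)
     = (if C \<subseteq> {..<m} then cl_sign A (sd A C) * x A * y (sd A C) else 0)"
    if A: "A \<in> Pow {..<m}" for A
  proof -
    have "(\<Sum>B\<in>Pow {..<m}. if sd A B = C then cl_sign A B * x A * y B else 0)
       = (\<Sum>B\<in>Pow {..<m}. if B = sd A C then cl_sign A B * x A * y B else 0)"
      by (rule sum.cong) (auto simp: sd_eq_iff)
    also have "\<dots> = (if sd A C \<in> Pow {..<m} then cl_sign A (sd A C) * x A * y (sd A C) else 0)"
      by (simp add: sum.delta)
    also have "\<dots> = (if C \<subseteq> {..<m} then cl_sign A (sd A C) * x A * y (sd A C) else 0)"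
    proof -
      have "sd A C \<in> Pow {..<m} \<longleftrightarrow> C \<subseteq> {..<m}" using A by blast
      thus ?thesis by simp
    qed
    finally show ?thesis .
  qed
  have "cl_mult m x y C = (\<Sum>A\<in>Pow {..<m}. (if C \<subseteq> {..<m} then cl_sign A (sd A C) * x A * y (sd A C) else 0))"
    unfolding cl_mult_def by (rule sum.cong[OF refl]) (rule inner)
  thus ?thesis by simp
qed

lemma sum_sd_reindex:
  assumes "C \<subseteq> {..<m}"
  shows "(\<Sum>B\<in>Pow {..<m}. g B) = (\<Sum>A\<in>Pow {..<m}. g (sd A C))"
  by (rule sum.reindex_bij_witness[where i="\<lambda>A. sd A C" and j="\<lambda>A. sd A C"]) (use assms in auto)

lemma sum_sd_reindex2:
  assumes "C \<subseteq> {..<m}"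
  shows "(\<Sum>B\<in>Pow {..<m}. g B) = (\<Sum>A\<in>Pow {..<m}. g (sd C A))"
  by (rule sum.reindex_bij_witness[where i="\<lambda>A. sd C A" and j="\<lambda>A. sd C A"]) (use assms in auto)

lemma finite_sub: "A \<subseteq> {..<(m::nat)} \<Longrightarrow> finite A"
  using finite_lessThan finite_subset by blast

lemma assoc: "cl_mult m (cl_mult m x y) z = cl_mult m x (cl_mult m y z)"
proof (rule ext)
  fix D
  show "cl_mult m (cl_mult m x y) z D = cl_mult m x (cl_mult m y z) D"
  proof (cases "D \<subseteq> {..<m}")
    case False thus ?thesis by (simp add: mult_eq)
  next
    case D: True
    let ?P = "Pow {..<m}"
    have "cl_mult m (cl_mult m x y) z D = (\<Sum>C\<in>?P. cl_sign C (sd C D) *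
        (\<Sum>A\<in>?P. cl_sign A (sd A C) * x A * y (sd A C)) * z (sd C D))"
    proof -
      have "cl_mult m (cl_mult m x y) z D = (\<Sum>C\<in>?P. cl_sign C (sd C D) * cl_mult m x y C * z (sd C D))"
        using D by (simp only: mult_eq[of m "cl_mult m x y" z D] if_True)
      also have "\<dots> = (\<Sum>C\<in>?P. cl_sign C (sd C D) *
        (\<Sum>A\<in>?P. cl_sign A (sd A C) * x A * y (sd A C)) * z (sd C D))"
        by (rule sum.cong[OF refl]) (simp add: mult_eq[of m x y])
      finally show ?thesis .
    qed
    also have "\<dots> = (\<Sum>C\<in>?P. \<Sum>A\<in>?P. cl_sign C (sd C D) * cl_sign A (sd A C) * x A * y (sd A C) * z (sd C D))"
      by (simp add: sum_distrib_left sum_distrib_right algebra_simps)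
    also have "\<dots> = (\<Sum>A\<in>?P. \<Sum>C\<in>?P. cl_sign C (sd C D) * cl_sign A (sd A C) * x A * y (sd A C) * z (sd C D))"
      by (rule sum.swap)
    also have "\<dots> = (\<Sum>A\<in>?P. \<Sum>C\<in>?P. cl_sign A (sd A D) * cl_sign (sd A C) (sd C D) * x A * y (sd A C) * z (sd C D))"
    proof (rule sum.cong[OF refl], rule sum.cong[OF refl])
      fix A C assume "A \<in> ?P" "C \<in> ?P"
      hence "cl_sign C (sd C D) * cl_sign A (sd A C) = cl_sign A (sd A D) * cl_sign (sd A C) (sd C D)"
        using D by (intro cocycle) (auto intro: finite_sub)
      thus "cl_sign C (sd C D) * cl_sign A (sd A C) * x A * y (sd A C) * z (sd C D) =
         cl_sign A (sd A D) * cl_sign (sd A C) (sd C D) * x A * y (sd A C) * z (sd C D)" by simp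
    qed
    also have "\<dots> = (\<Sum>A\<in>?P. cl_sign A (sd A D) * x A *
        (\<Sum>B\<in>?P. cl_sign B (sd B (sd A D)) * y B * z (sd B (sd A D))))"
    proof (rule sum.cong[OF refl])
      fix A assume A: "A \<in> ?P"
      have "(\<Sum>B\<in>?P. cl_sign B (sd B (sd A D)) * y B * z (sd B (sd A D)))
          = (\<Sum>C\<in>?P. cl_sign (sd A C) (sd (sd A C) (sd A D)) * y (sd A C) * z (sd (sd A C) (sd A D)))"
        by (rule sum_sd_reindex2) (use A in auto)
      also have "\<dots> = (\<Sum>C\<in>?P. cl_sign (sd A C) (sd C D) * y (sd A C) * z (sd C D))"
      proof -
        have e: "sd (sd A C) (sd A D) = sd C D" for C by blast
        show ?thesis by (simp only: e)
      qed
      finally show "(\<Sum>C\<in>?P. cl_sign A (sd A D) * cl_sign (sd A C) (sd C D) * x A * y (sd A C) * z (sd C D))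
         = cl_sign A (sd A D) * x A * (\<Sum>B\<in>?P. cl_sign B (sd B (sd A D)) * y B * z (sd B (sd A D)))"
        by (simp add: sum_distrib_left algebra_simps)
    qed
    also have "\<dots> = cl_mult m x (cl_mult m y z) D"
    proof -
      have "\<And>A. A \<in> ?P \<Longrightarrow> cl_mult m y z (sd A D) = (\<Sum>B\<in>?P. cl_sign B (sd B (sd A D)) * y B * z (sd B (sd A D)))"
        using D by (subst mult_eq) (auto simp: sd_sub)
      hence "(\<Sum>A\<in>?P. cl_sign A (sd A D) * x A * cl_mult m y z (sd A D)) = (\<Sum>A\<in>?P. cl_sign A (sd A D) * x A *
        (\<Sum>B\<in>?P. cl_sign B (sd B (sd A D)) * y B * z (sd B (sd A D))))"
        by (intro sum.cong) auto
      thus ?thesis using D by (simp only: mult_eq[of m x "cl_mult m y z" D] if_True)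
    qed
    finally show ?thesis .
  qed
qed



lemma sg_empty[simp]: "cl_sign A {} = 1" "cl_sign {} A = 1" by (simp_all add: cl_sign_def)

lemma supp_mult: "supp m (cl_mult m x y)" unfolding supp_def by (simp add: mult_eq)
lemma supp_one: "supp m cl_one" unfolding supp_def cl_one_def by auto
lemma supp_vec: "supp m (cl_vec m v)" unfolding supp_def cl_vec_def by auto
lemma supp_csm: "supp m x \<Longrightarrow> supp m (csm c x)" unfolding supp_def csm_def by auto
lemma supp_alpha: "supp m x \<Longrightarrow> supp m (cl_alpha x)" unfolding supp_def cl_alpha_def by auto
lemma cl_one_dl: "cl_one = dl {}" unfolding cl_one_def dl_def by auto

lemma mult_dl_right:
  assumes B: "B \<subseteq> {..<m}"
  shows "cl_mult m x (dl B) C = (if C \<subseteq> {..<m} then cl_sign (sd B C) B * x (sd B C) else 0)"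
proof (cases "C \<subseteq> {..<m}")
  case True
  have "cl_mult m x (dl B) C = (\<Sum>A\<in>Pow {..<m}. cl_sign A (sd A C) * x A * dl B (sd A C))"
    using True by (simp add: mult_eq)
  also have "\<dots> = (\<Sum>A\<in>Pow {..<m}. if A = sd B C then cl_sign A (sd A C) * x A else 0)"
    by (rule sum.cong) (auto simp: dl_def)
  also have "\<dots> = cl_sign (sd B C) B * x (sd B C)"
    using True B by (subst sum.delta) auto
  finally show ?thesis using True by simp
qed (simp add: mult_eq)

lemma mult_dl_left:
  assumes B: "B \<subseteq> {..<m}"
  shows "cl_mult m (dl B) y C = (if C \<subseteq> {..<m} then cl_sign B (sd B C) * y (sd B C) else 0)"
proof (cases "C \<subseteq> {..<m}")
  case True
  have "cl_mult m (dl B) y C = (\<Sum>A\<in>Pow {..<m}. cl_sign A (sd A C) * dl B A * y (sd A C))"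
    using True by (simp add: mult_eq)
  also have "\<dots> = (\<Sum>A\<in>Pow {..<m}. if A = B then cl_sign A (sd A C) * y (sd A C) else 0)"
    by (rule sum.cong) (auto simp: dl_def)
  also have "\<dots> = cl_sign B (sd B C) * y (sd B C)"
    using True B by (subst sum.delta) auto
  finally show ?thesis using True by simp
qed (simp add: mult_eq)

lemma unit_right: "supp m x \<Longrightarrow> cl_mult m x cl_one = x"
  unfolding cl_one_dl by (rule ext) (auto simp: mult_dl_right supp_def)
lemma unit_left: "supp m x \<Longrightarrow> cl_mult m cl_one x = x"
  unfolding cl_one_dl by (rule ext) (auto simp: mult_dl_left supp_def)

lemma csm_left: "cl_mult m (csm c x) y = csm c (cl_mult m x y)"
  unfolding csm_def by (rule ext) (simp add: mult_eq sum_distrib_left algebra_simps)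
lemma csm_right: "cl_mult m x (csm c y) = csm c (cl_mult m x y)"
  unfolding csm_def by (rule ext) (simp add: mult_eq sum_distrib_left algebra_simps)
lemma cadd_left: "cl_mult m (cadd x y) z = cadd (cl_mult m x z) (cl_mult m y z)"
  unfolding cadd_def by (rule ext) (simp add: mult_eq sum.distrib distrib_left distrib_right)
lemma cadd_right: "cl_mult m x (cadd y z) = cadd (cl_mult m x y) (cl_mult m x z)"
  unfolding cadd_def by (rule ext) (simp add: mult_eq sum.distrib distrib_left distrib_right)
lemma csm_csm: "csm a (csm b x) = csm (a * b) x" unfolding csm_def by auto
lemma csm_one: "csm 1 x = x" unfolding csm_def by auto

lemma alpha_mult: "cl_alpha (cl_mult m x y) = cl_mult m (cl_alpha x) (cl_alpha y)"
proof (rule ext)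
  fix C
  show "cl_alpha (cl_mult m x y) C = cl_mult m (cl_alpha x) (cl_alpha y) C"
  proof (cases "C \<subseteq> {..<m}")
    case True
    have h: "(-1::real) ^ card A * (-1) ^ card (sd A C) = (-1) ^ card C" if "A \<in> Pow {..<m}" for A
    proof -
      have "(-1::real) ^ card (sd A C) = (-1) ^ card A * (-1) ^ card C"
        using that True by (intro card_sd_parity) (auto intro: finite_sub)
      hence "(-1::real) ^ card A * (-1) ^ card (sd A C) = ((-1) ^ card A * (-1) ^ card A) * (-1) ^ card C"
        by (simp add: mult.assoc)
      thus ?thesis using pm1_sq[of "card A"] by simp
    qed
    have "(\<Sum>A\<in>Pow {..<m}. cl_sign A (sd A C) * ((-1) ^ card A * x A) * ((-1) ^ card (sd A C) * y (sd A C)))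
      = (\<Sum>A\<in>Pow {..<m}. (-1) ^ card C * (cl_sign A (sd A C) * x A * y (sd A C)))"
    proof (rule sum.cong[OF refl])
      fix A assume A: "A \<in> Pow {..<m}"
      have "cl_sign A (sd A C) * ((-1) ^ card A * x A) * ((-1) ^ card (sd A C) * y (sd A C))
        = ((-1::real) ^ card A * (-1) ^ card (sd A C)) * (cl_sign A (sd A C) * x A * y (sd A C))"
        by (simp only: mult_ac)
      thus "cl_sign A (sd A C) * ((-1) ^ card A * x A) * ((-1) ^ card (sd A C) * y (sd A C))
        = (-1) ^ card C * (cl_sign A (sd A C) * x A * y (sd A C))" by (simp only: h[OF A])
    qed
    thus ?thesis using True unfolding cl_alpha_def by (simp add: mult_eq sum_distrib_left)
  qed (simp add: mult_eq cl_alpha_def)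
qed

lemma alpha_one: "cl_alpha cl_one = cl_one" unfolding cl_alpha_def cl_one_def by auto
lemma alpha_alpha: "cl_alpha (cl_alpha x) = x"
  unfolding cl_alpha_def using pm1_sq by (simp add: mult.assoc[symmetric])
lemma alpha_csm: "cl_alpha (csm c x) = csm c (cl_alpha x)" unfolding cl_alpha_def csm_def by (auto simp: algebra_simps)
lemma alpha_vec: "cl_alpha (cl_vec m v) = csm (-1) (cl_vec m v)"
  unfolding cl_alpha_def csm_def cl_vec_def by (rule ext) auto

definition cl_bar :: "cl \<Rightarrow> cl" where "cl_bar x = (\<lambda>A. tau A * x A)"

lemma bar_mult: "cl_bar (cl_mult m x y) = cl_mult m (cl_bar y) (cl_bar x)"
proof (rule ext)
  fix C
  show "cl_bar (cl_mult m x y) C = cl_mult m (cl_bar y) (cl_bar x) C"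
  proof (cases "C \<subseteq> {..<m}")
    case True
    have "cl_mult m (cl_bar y) (cl_bar x) C = (\<Sum>B\<in>Pow {..<m}. cl_sign B (sd B C) * (tau B * y B) * (tau (sd B C) * x (sd B C)))"
      using True by (simp add: mult_eq cl_bar_def)
    also have "\<dots> = (\<Sum>A\<in>Pow {..<m}. cl_sign (sd A C) (sd (sd A C) C) * (tau (sd A C) * y (sd A C)) * (tau (sd (sd A C) C) * x (sd (sd A C) C)))"
      by (rule sum_sd_reindex) (rule True)
    also have "\<dots> = (\<Sum>A\<in>Pow {..<m}. tau C * (cl_sign A (sd A C) * x A * y (sd A C)))"
    proof (rule sum.cong[OF refl])
      fix A assume A: "A \<in> Pow {..<m}"
      have "tau (sd A (sd A C)) * cl_sign A (sd A C) = cl_sign (sd A C) A * tau A * tau (sd A C)"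
        using A True by (intro tau_sd) (auto intro: finite_sub)
      hence "tau C * cl_sign A (sd A C) = cl_sign (sd A C) A * tau A * tau (sd A C)" by simp
      hence h: "tau C * cl_sign A (sd A C) = cl_sign (sd A C) A * tau A * tau (sd A C)" .
      have "tau C * (cl_sign A (sd A C) * x A * y (sd A C)) = (tau C * cl_sign A (sd A C)) * x A * y (sd A C)"
        by (simp only: mult_ac)
      also have "\<dots> = (cl_sign (sd A C) A * tau A * tau (sd A C)) * x A * y (sd A C)" by (simp only: h)
      also have "\<dots> = cl_sign (sd A C) A * (tau (sd A C) * y (sd A C)) * (tau A * x A)"
        by (simp only: mult_ac)
      finally show "cl_sign (sd A C) (sd (sd A C) C) * (tau (sd A C) * y (sd A C)) * (tau (sd (sd A C) C) * x (sd (sd A C) C))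
          = tau C * (cl_sign A (sd A C) * x A * y (sd A C))"
        by (simp only: sd_inv1)
    qed
    finally show ?thesis using True by (simp add: mult_eq cl_bar_def sum_distrib_left)
  qed (simp add: mult_eq cl_bar_def)
qed

lemma tau_empty: "tau {} = 1" unfolding tau_def iv_def pc_def ipairs_def by simp
lemma tau_single: "tau {i} = -1"
proof -
  have "ipairs {i} {i} = {}" unfolding ipairs_def by auto
  thus ?thesis unfolding tau_def iv_def pc_def by simp
qed
lemma bar_one: "cl_bar cl_one = cl_one" unfolding cl_bar_def cl_one_def by (auto simp: tau_empty)
lemma bar_csm: "cl_bar (csm c x) = csm c (cl_bar x)" unfolding cl_bar_def csm_def by (auto simp: algebra_simps)
lemma bar_vec: "cl_bar (cl_vec m v) = csm (-1) (cl_vec m v)"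
  unfolding cl_bar_def csm_def cl_vec_def by (rule ext) (auto simp: tau_single)

lemma vec_sum: "cl_vec m v B = (\<Sum>j<m. if B = {j} then v $ j else 0)"
proof (cases "\<exists>i<m. B = {i}")
  case True
  then obtain i where i: "i < m" "B = {i}" by auto
  have "(\<Sum>j<m. if B = {j} then v $ j else 0) = (\<Sum>j<m. if j = i then v $ j else 0)"
    using i by (intro sum.cong) auto
  also have "\<dots> = v $ i" using i by simp
  finally show ?thesis using i unfolding cl_vec_def by auto
next
  case False
  thus ?thesis unfolding cl_vec_def by (auto intro!: sum.neutral)
qed

lemma vec_left:
  assumes C: "C \<subseteq> {..<m}"
  shows "cl_mult m (cl_vec m u) y C = (\<Sum>i<m. u $ i * cl_sign {i} (sd {i} C) * y (sd {i} C))"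
proof -
  have "cl_mult m (cl_vec m u) y C = (\<Sum>A\<in>Pow {..<m}. cl_sign A (sd A C) * cl_vec m u A * y (sd A C))"
    using C by (simp add: mult_eq)
  also have "\<dots> = (\<Sum>A\<in>Pow {..<m}. \<Sum>j<m. if A = {j} then cl_sign A (sd A C) * u $ j * y (sd A C) else 0)"
    by (rule sum.cong[OF refl]) (simp only: vec_sum sum_distrib_left sum_distrib_right, rule sum.cong, auto)
  also have "\<dots> = (\<Sum>j<m. \<Sum>A\<in>Pow {..<m}. if A = {j} then cl_sign A (sd A C) * u $ j * y (sd A C) else 0)"
    by (rule sum.swap)
  also have "\<dots> = (\<Sum>i<m. u $ i * cl_sign {i} (sd {i} C) * y (sd {i} C))"
    by (rule sum.cong[OF refl]) (subst sum.delta, auto)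
  finally show ?thesis .
qed

lemma vec_right:
  assumes C: "C \<subseteq> {..<m}"
  shows "cl_mult m x (cl_vec m v) C = (\<Sum>i<m. v $ i * cl_sign (sd {i} C) {i} * x (sd {i} C))"
proof -
  have "cl_mult m x (cl_vec m v) C = (\<Sum>A\<in>Pow {..<m}. \<Sum>j<m. if A = sd {j} C then cl_sign A (sd A C) * x A * v $ j else 0)"
  proof -
    have e: "\<And>A j. (sd A C = {j}) = (A = sd {j} C)" by blast
    have "cl_mult m x (cl_vec m v) C = (\<Sum>A\<in>Pow {..<m}. cl_sign A (sd A C) * x A * cl_vec m v (sd A C))"
      using C by (simp add: mult_eq)
    also have "\<dots> = (\<Sum>A\<in>Pow {..<m}. \<Sum>j<m. if A = sd {j} C then cl_sign A (sd A C) * x A * v $ j else 0)"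
      by (rule sum.cong[OF refl]) (simp only: vec_sum sum_distrib_left, rule sum.cong, auto simp: e)
    finally show ?thesis .
  qed
  also have "\<dots> = (\<Sum>j<m. \<Sum>A\<in>Pow {..<m}. if A = sd {j} C then cl_sign A (sd A C) * x A * v $ j else 0)"
    by (rule sum.swap)
  also have "\<dots> = (\<Sum>i<m. v $ i * cl_sign (sd {i} C) {i} * x (sd {i} C))"
  proof (rule sum.cong[OF refl])
    fix i assume i: "i \<in> {..<m}"
    have "sd {i} C \<in> Pow {..<m}" using i C by auto
    thus "(\<Sum>A\<in>Pow {..<m}. if A = sd {i} C then cl_sign A (sd A C) * x A * v $ i else 0) =
         v $ i * cl_sign (sd {i} C) {i} * x (sd {i} C)"
      by (subst sum.delta) (auto simp: algebra_simps)
  qed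
  finally show ?thesis .
qed

lemma vec_vec:
  assumes C: "C \<subseteq> {..<m}"
  shows "cl_mult m (cl_vec m u) (cl_vec m v) C =
    (\<Sum>i<m. \<Sum>j<m. if C = sd {i} {j} then u $ i * v $ j * cl_sign {i} {j} else 0)"
  unfolding vec_left[OF C] vec_sum sum_distrib_left
proof (rule sum.cong[OF refl], rule sum.cong[OF refl])
  fix i j
  have "(sd {i} C = {j}) = (C = sd {i} {j})" by blast
  moreover have "C = sd {i} {j} \<Longrightarrow> sd {i} C = {j}" by blast
  ultimately show "u $ i * cl_sign {i} (sd {i} C) * (if sd {i} C = {j} then v $ j else 0) =
         (if C = sd {i} {j} then u $ i * v $ j * cl_sign {i} {j} else 0)" by auto
qed

lemma sg_single: "cl_sign {i} {j} = (if i = j then -1 else if j < i then -1 else 1)"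
proof -
  have "{(a, b). a \<in> {i} \<and> b \<in> {j} \<and> b < a} = (if j < i then {(i, j)} else {})" by auto
  thus ?thesis unfolding cl_sign_def by auto
qed




lemma clifford:
  assumes u: "u \<in> carrier_vec m" and v: "v \<in> carrier_vec m"
  shows "cadd (cl_mult m (cl_vec m u) (cl_vec m v)) (cl_mult m (cl_vec m v) (cl_vec m u)) = csm (- 2 * (u \<bullet> v)) cl_one"
proof (rule ext)
  fix C
  show "cadd (cl_mult m (cl_vec m u) (cl_vec m v)) (cl_mult m (cl_vec m v) (cl_vec m u)) C = csm (- 2 * (u \<bullet> v)) cl_one C"
  proof (cases "C \<subseteq> {..<m}")
    case False
    hence "C \<noteq> {}" by auto
    thus ?thesis using False by (simp add: cadd_def csm_def mult_eq cl_one_def)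
  next
    case True
    have s2: "(\<Sum>i<m. \<Sum>j<m. if C = sd {i} {j} then v $ i * u $ j * cl_sign {i} {j} else 0)
       = (\<Sum>i<m. \<Sum>j<m. if C = sd {i} {j} then u $ i * v $ j * cl_sign {j} {i} else 0)"
      by (subst sum.swap) (intro sum.cong refl, auto simp: Un_commute)
    have "cadd (cl_mult m (cl_vec m u) (cl_vec m v)) (cl_mult m (cl_vec m v) (cl_vec m u)) C
      = (\<Sum>i<m. \<Sum>j<m. if C = sd {i} {j} then u $ i * v $ j * (cl_sign {i} {j} + cl_sign {j} {i}) else 0)"
      unfolding cadd_def vec_vec[OF True] s2 sum.distrib[symmetric] by (intro sum.cong refl) (auto simp: algebra_simps)
    also have "\<dots> = (\<Sum>i<m. \<Sum>j<m. if j = i then (if C = {} then -2 * (u $ i * v $ i) else 0) else 0)"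
      by (intro sum.cong refl) (auto simp: sg_single)
    also have "\<dots> = (\<Sum>i<m. if C = {} then -2 * (u $ i * v $ i) else 0)"
      by (simp add: sum.delta)
    also have "\<dots> = csm (- 2 * (u \<bullet> v)) cl_one C"
      using v unfolding csm_def cl_one_def scalar_prod_def
      by (auto simp: sum_distrib_left lessThan_atLeast0)
    finally show ?thesis .
  qed
qed



lemma supp_bar: "supp m x \<Longrightarrow> supp m (cl_bar x)" unfolding supp_def cl_bar_def by auto

lemma vec_unit_sq:
  assumes u: "u \<in> carrier_vec m" and uu: "u \<bullet> u = 1"
  shows "cl_mult m (cl_vec m u) (cl_vec m u) = csm (-1) cl_one"
proof -
  have "cadd (cl_mult m (cl_vec m u) (cl_vec m u)) (cl_mult m (cl_vec m u) (cl_vec m u)) = csm (- 2) cl_one"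
    using clifford[OF u u] uu by simp
  thus ?thesis unfolding fun_eq_iff cadd_def csm_def by (auto simp: algebra_simps)
qed

lemma cl_vec_the: "i < m \<Longrightarrow> cl_vec m v {i} = v $ i" unfolding cl_vec_def by auto

lemma vec_pointwise:
  assumes "\<And>i. i < m \<Longrightarrow> w $ i = a * v $ i + b * u $ i"
  shows "cl_vec m w = (\<lambda>A. a * cl_vec m v A + b * cl_vec m u A)"
proof (rule ext)
  fix A show "cl_vec m w A = a * cl_vec m v A + b * cl_vec m u A"
  proof (cases "\<exists>i<m. A = {i}")
    case True
    then obtain i where "i < m" "A = {i}" by auto
    thus ?thesis using assms by (simp add: cl_vec_the)
  next
    case False thus ?thesis unfolding cl_vec_def by auto
  qed
qed

definition refl_mat :: "nat \<Rightarrow> real vec \<Rightarrow> real mat" where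
  "refl_mat m u = mat m m (\<lambda>(i, j). (if i = j then 1 else 0) - 2 * (u $ i * u $ j))"

lemma refl_mat_carrier[simp]: "refl_mat m u \<in> carrier_mat m m" unfolding refl_mat_def by simp

lemma refl_mult_vec_index:
  assumes u: "u \<in> carrier_vec m" and v: "v \<in> carrier_vec m" and i: "i < m"
  shows "(refl_mat m u *\<^sub>v v) $ i = v $ i - 2 * (u \<bullet> v) * u $ i"
proof -
  have "(refl_mat m u *\<^sub>v v) $ i = (\<Sum>j\<in>{0..<m}. ((if i = j then 1 else 0) - 2 * (u $ i * u $ j)) * v $ j)"
    using i v unfolding refl_mat_def by (simp add: scalar_prod_def row_def)
  also have "\<dots> = (\<Sum>j\<in>{0..<m}. (if i = j then v $ j else 0) - 2 * u $ i * (u $ j * v $ j))"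
    by (rule sum.cong) (auto simp: algebra_simps)
  also have "\<dots> = (\<Sum>j\<in>{0..<m}. (if i = j then v $ j else 0)) - (\<Sum>j\<in>{0..<m}. 2 * u $ i * (u $ j * v $ j))"
    by (rule sum_subtractf)
  also have "\<dots> = (\<Sum>j\<in>{0..<m}. (if i = j then v $ j else 0)) - 2 * u $ i * (\<Sum>j\<in>{0..<m}. u $ j * v $ j)"
    by (simp add: sum_distrib_left)
  also have "\<dots> = v $ i - 2 * (u \<bullet> v) * u $ i"
    using i v by (simp add: scalar_prod_def)
  finally show ?thesis .
qed

lemma cl_vec_refl:
  assumes u: "u \<in> carrier_vec m" and v: "v \<in> carrier_vec m"
  shows "cl_vec m (refl_mat m u *\<^sub>v v) = cadd (cl_vec m v) (csm (- 2 * (u \<bullet> v)) (cl_vec m u))"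
  unfolding cadd_def csm_def
  by (subst vec_pointwise[where a=1 and b="- 2 * (u \<bullet> v)" and v=v and u=u]) (auto simp: refl_mult_vec_index[OF u v])

lemma alpha_u_v:
  assumes u: "u \<in> carrier_vec m" and uu: "u \<bullet> u = 1" and v: "v \<in> carrier_vec m"
  shows "cl_mult m (cl_alpha (cl_vec m u)) (cl_vec m v) = cl_mult m (cl_vec m (refl_mat m u *\<^sub>v v)) (cl_vec m u)"
proof -
  have c: "cadd (cl_mult m (cl_vec m u) (cl_vec m v)) (cl_mult m (cl_vec m v) (cl_vec m u)) = csm (- 2 * (u \<bullet> v)) cl_one"
    by (rule clifford[OF u v])
  have s: "cl_mult m (cl_vec m u) (cl_vec m u) = csm (-1) cl_one" by (rule vec_unit_sq[OF u uu])
  have c': "\<And>C. cl_mult m (cl_vec m u) (cl_vec m v) C + cl_mult m (cl_vec m v) (cl_vec m u) C = - 2 * (u \<bullet> v) * cl_one C"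
    using c unfolding fun_eq_iff cadd_def csm_def by auto
  show ?thesis unfolding alpha_vec cl_vec_refl[OF u v] cadd_left csm_left s
  proof (rule ext)
    fix C
    show "csm (- 1) (cl_mult m (cl_vec m u) (cl_vec m v)) C =
      cadd (cl_mult m (cl_vec m v) (cl_vec m u)) (csm (- 2 * (u \<bullet> v)) (csm (- 1) cl_one)) C"
      using c'[of C] unfolding cadd_def csm_def by (simp add: algebra_simps)
  qed
qed

lemma supp_pin: "x \<in> pin m \<Longrightarrow> supp m x"
  by (induction rule: pin.induct) (auto simp: supp_one supp_mult)

lemma pin_inv: "x \<in> pin m \<Longrightarrow> \<exists>y. supp m y \<and> cl_mult m x y = cl_one \<and> cl_mult m y x = cl_one"
proof (induction rule: pin.induct)
  case pin_one thus ?case by (intro exI[of _ cl_one]) (simp add: unit_left supp_one)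
next
  case (pin_step x v)
  then obtain y where y: "supp m y" "cl_mult m x y = cl_one" "cl_mult m y x = cl_one" by auto
  let ?u = "cl_vec m v"
  have s: "cl_mult m ?u ?u = csm (-1) cl_one" using vec_unit_sq pin_step by auto
  let ?y = "cl_mult m (csm (-1) ?u) y"
  have "cl_mult m (cl_mult m x ?u) ?y = cl_mult m x (cl_mult m (cl_mult m ?u (csm (-1) ?u)) y)"
    by (simp add: assoc)
  also have "\<dots> = cl_one" using s y by (simp add: csm_right csm_left csm_csm csm_one unit_left supp_one)
  finally have 1: "cl_mult m (cl_mult m x ?u) ?y = cl_one" .
  have "cl_mult m ?y (cl_mult m x ?u) = cl_mult m (csm (-1) ?u) (cl_mult m (cl_mult m y x) ?u)"
    by (simp add: assoc)
  also have "\<dots> = cl_one" using s y by (simp add: csm_right csm_left csm_csm csm_one unit_left supp_vec)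
  finally have 2: "cl_mult m ?y (cl_mult m x ?u) = cl_one" .
  show ?case using 1 2 supp_mult by blast
qed

lemma pin_bar: "x \<in> pin m \<Longrightarrow> cl_mult m x (cl_bar x) = cl_one"
proof (induction rule: pin.induct)
  case pin_one thus ?case by (simp add: bar_one unit_left supp_one)
next
  case (pin_step x v)
  let ?u = "cl_vec m v"
  have s: "cl_mult m ?u ?u = csm (-1) cl_one" using vec_unit_sq pin_step by auto
  have "cl_mult m (cl_mult m x ?u) (cl_bar (cl_mult m x ?u)) = cl_mult m x (cl_mult m (cl_mult m ?u (csm (-1) ?u)) (cl_bar x))"
    by (simp add: assoc bar_mult bar_vec)
  also have "\<dots> = cl_one" using s pin_step supp_pin[OF pin_step(1)]
    by (simp add: csm_right csm_left csm_csm csm_one unit_left supp_bar)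
  finally show ?case .
qed

lemma pin_mult: "y \<in> pin m \<Longrightarrow> x \<in> pin m \<Longrightarrow> cl_mult m x y \<in> pin m"
proof (induction rule: pin.induct)
  case pin_one thus ?case by (simp add: unit_right supp_pin)
next
  case (pin_step y v)
  thus ?case by (simp add: assoc[symmetric] pin.pin_step)
qed

lemma pin_neg:
  assumes "x \<in> pin m" "0 < m"
  shows "csm (-1) x \<in> pin m"
proof -
  let ?e = "unit_vec m 0 :: real vec"
  have e: "?e \<in> carrier_vec m" "?e \<bullet> ?e = 1" using assms by (auto simp: scalar_prod_left_unit)
  have "cl_mult m (cl_mult m x (cl_vec m ?e)) (cl_vec m ?e) \<in> pin m"
    using assms e by (intro pin.pin_step) auto
  also have "cl_mult m (cl_mult m x (cl_vec m ?e)) (cl_vec m ?e) = csm (-1) x"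
    using vec_unit_sq[OF e] supp_pin[OF assms(1)] by (simp add: assoc csm_right unit_right)
  finally show ?thesis .
qed



definition rho_prop :: "nat \<Rightarrow> cl \<Rightarrow> real mat \<Rightarrow> bool" where
  "rho_prop m x A \<longleftrightarrow> A \<in> carrier_mat m m \<and>
     (\<forall>v\<in>carrier_vec m. cl_mult m (cl_alpha x) (cl_vec m v) = cl_mult m (cl_vec m (A *\<^sub>v v)) x)"

lemma mat_eq_vec:
  fixes A B :: "real mat"
  assumes A: "A \<in> carrier_mat m m" and B: "B \<in> carrier_mat m m"
    and h: "\<And>v. v \<in> carrier_vec m \<Longrightarrow> A *\<^sub>v v = B *\<^sub>v v"
  shows "A = B"
proof (rule eq_matI)
  fix i j assume i: "i < dim_row B" and j: "j < dim_col B"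
  have "(A *\<^sub>v unit_vec m j) $ i = (B *\<^sub>v unit_vec m j) $ i" using h[of "unit_vec m j"] by simp
  thus "A $$ (i, j) = B $$ (i, j)" using i j A B by simp
qed (use A B in auto)

lemma cl_vec_inj:
  assumes "v \<in> carrier_vec m" "w \<in> carrier_vec m" "cl_vec m v = cl_vec m w"
  shows "v = w"
proof (rule eq_vecI)
  fix i assume "i < dim_vec w"
  hence "i < m" using assms by auto
  thus "v $ i = w $ i" using assms(3) cl_vec_the[of i m v] cl_vec_the[of i m w] by simp
qed (use assms in auto)

lemma rho_unique:
  assumes x: "x \<in> pin m" and A: "rho_prop m x A" and B: "rho_prop m x B"
  shows "A = B"
proof -
  obtain y where y: "supp m y" "cl_mult m x y = cl_one" "cl_mult m y x = cl_one" using pin_inv[OF x] by auto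
  show ?thesis
  proof (rule mat_eq_vec[of A m B])
    show "A \<in> carrier_mat m m" "B \<in> carrier_mat m m" using A B unfolding rho_prop_def by auto
  next
    fix v :: "real vec" assume v: "v \<in> carrier_vec m"
    have "cl_mult m (cl_vec m (A *\<^sub>v v)) x = cl_mult m (cl_vec m (B *\<^sub>v v)) x"
      using A B v unfolding rho_prop_def by auto
    hence "cl_mult m (cl_mult m (cl_vec m (A *\<^sub>v v)) x) y = cl_mult m (cl_mult m (cl_vec m (B *\<^sub>v v)) x) y" by simp
    hence "cl_vec m (A *\<^sub>v v) = cl_vec m (B *\<^sub>v v)" by (simp add: assoc y unit_right supp_vec)
    thus "A *\<^sub>v v = B *\<^sub>v v" using A B v unfolding rho_prop_def by (intro cl_vec_inj[of _ m]) auto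
  qed
qed

lemma rho_prop_one: "rho_prop m cl_one (1\<^sub>m m)"
  unfolding rho_prop_def by (simp add: alpha_one unit_left unit_right supp_vec)

lemma rho_prop_step:
  assumes A: "rho_prop m x A" and u: "u \<in> carrier_vec m" "u \<bullet> u = 1"
  shows "rho_prop m (cl_mult m x (cl_vec m u)) (A * refl_mat m u)"
  unfolding rho_prop_def
proof (intro conjI ballI)
  show "A * refl_mat m u \<in> carrier_mat m m" using A unfolding rho_prop_def by auto
next
  fix v :: "real vec" assume v: "v \<in> carrier_vec m"
  have Ac: "A \<in> carrier_mat m m" using A unfolding rho_prop_def by auto
  have Rv: "refl_mat m u *\<^sub>v v \<in> carrier_vec m" by (metis mult_mat_vec_carrier refl_mat_carrier v)
  have "cl_mult m (cl_alpha (cl_mult m x (cl_vec m u))) (cl_vec m v)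
      = cl_mult m (cl_alpha x) (cl_mult m (cl_alpha (cl_vec m u)) (cl_vec m v))"
    by (simp add: alpha_mult assoc)
  also have "\<dots> = cl_mult m (cl_mult m (cl_alpha x) (cl_vec m (refl_mat m u *\<^sub>v v))) (cl_vec m u)"
    by (simp add: alpha_u_v[OF u v] assoc)
  also have "\<dots> = cl_mult m (cl_vec m (A *\<^sub>v (refl_mat m u *\<^sub>v v))) (cl_mult m x (cl_vec m u))"
    using A Rv unfolding rho_prop_def by (simp add: assoc)
  also have "A *\<^sub>v (refl_mat m u *\<^sub>v v) = (A * refl_mat m u) *\<^sub>v v"
    using Ac v by (simp add: assoc_mult_mat_vec[symmetric, of A m m _ m])
  finally show "cl_mult m (cl_alpha (cl_mult m x (cl_vec m u))) (cl_vec m v) =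
         cl_mult m (cl_vec m ((A * refl_mat m u) *\<^sub>v v)) (cl_mult m x (cl_vec m u))" .
qed

lemma rho_prop_ex: "x \<in> pin m \<Longrightarrow> \<exists>A. rho_prop m x A"
proof (induction rule: pin.induct)
  case pin_one thus ?case using rho_prop_one by blast
next
  case (pin_step x v) thus ?case using rho_prop_step by blast
qed

lemma rho_eq: "x \<in> pin m \<Longrightarrow> rho_prop m x A \<Longrightarrow> pin_rho m x = A"
  unfolding pin_rho_def using rho_unique unfolding rho_prop_def by (intro the_equality) (auto simp: rho_prop_def)

lemma rho_prop_rho: "x \<in> pin m \<Longrightarrow> rho_prop m x (pin_rho m x)"
  using rho_prop_ex rho_eq by metis

lemma rho_carrier: "x \<in> pin m \<Longrightarrow> pin_rho m x \<in> carrier_mat m m"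
  using rho_prop_rho unfolding rho_prop_def by auto

lemma rho_one: "pin_rho m cl_one = 1\<^sub>m m"
  by (rule rho_eq) (auto intro: pin.pin_one rho_prop_one)

lemma rho_step: "x \<in> pin m \<Longrightarrow> u \<in> carrier_vec m \<Longrightarrow> u \<bullet> u = 1 \<Longrightarrow>
   pin_rho m (cl_mult m x (cl_vec m u)) = pin_rho m x * refl_mat m u"
  by (rule rho_eq) (auto intro: pin.pin_step rho_prop_step rho_prop_rho)

lemma rho_prop_csm: "rho_prop m x A \<Longrightarrow> rho_prop m (csm c x) A"
  unfolding rho_prop_def by (simp add: alpha_csm csm_left csm_right)

lemma rho_neg: "x \<in> pin m \<Longrightarrow> 0 < m \<Longrightarrow> pin_rho m (csm (-1) x) = pin_rho m x"
  by (rule rho_eq) (auto intro: pin_neg rho_prop_csm rho_prop_rho)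

lemma sign_single:
  assumes A: "finite A" and i: "i \<in> A"
  shows "(-1::real) ^ card A * cl_sign A {i} = - cl_sign {i} A"
proof -
  let ?P = "{a \<in> A. i < a}" and ?Q = "{b \<in> A. b < i}"
  have e1: "{(a, b). a \<in> A \<and> b \<in> {i} \<and> b < a} = (\<lambda>a. (a, i)) ` ?P" by auto
  have e2: "{(a, b). a \<in> {i} \<and> b \<in> A \<and> b < a} = (\<lambda>b. (i, b)) ` ?Q" by auto
  have c1: "card {(a, b). a \<in> A \<and> b \<in> {i} \<and> b < a} = card ?P"
    unfolding e1 by (rule card_image) (auto simp: inj_on_def)
  have c2: "card {(a, b). a \<in> {i} \<and> b \<in> A \<and> b < a} = card ?Q"
    unfolding e2 by (rule card_image) (auto simp: inj_on_def)
  have i1: "A \<inter> {i} = {i}" "{i} \<inter> A = {i}" using i by auto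
  have AU: "A = (?P \<union> ?Q) \<union> {i}" using i by auto
  have d1: "?P \<inter> ?Q = {}" by auto
  have d2: "(?P \<union> ?Q) \<inter> {i} = {}" by auto
  have "card A = card (?P \<union> ?Q) + card {i}"
    by (subst AU) (rule card_Un_disjoint, use A d2 in auto)
  also have "card (?P \<union> ?Q) = card ?P + card ?Q"
    by (rule card_Un_disjoint) (use A d1 in auto)
  finally have cA: "card A = card ?P + card ?Q + 1" by simp
  have "(-1::real) ^ card A * cl_sign A {i} = (-1) ^ (card ?P + card ?Q + 1) * (-1) ^ (card ?P + 1)"
    unfolding cl_sign_def c1 i1 cA by simp
  also have "\<dots> = (-1) ^ card ?Q * ((-1) ^ card ?P * (-1) ^ card ?P) * ((-1) ^ 1 * (-1) ^ 1)"
    by (simp only: power_add mult_ac)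
  also have "\<dots> = (-1) ^ card ?Q" using pm1_sq[of "card ?P"] by simp
  also have "\<dots> = - cl_sign {i} A" unfolding cl_sign_def c2 i1 by simp
  finally show ?thesis .
qed

lemma cl_vec_unit: "i < m \<Longrightarrow> cl_vec m (unit_vec m i) = dl {i}"
  unfolding cl_vec_def dl_def by (rule ext) (auto split: if_splits)

lemma twisted_central:
  assumes z: "supp m z"
    and h: "\<And>v. v \<in> carrier_vec m \<Longrightarrow> cl_mult m (cl_alpha z) (cl_vec m v) = cl_mult m (cl_vec m v) z"
  shows "z = csm (z {}) cl_one"
proof (rule ext)
  fix A
  show "z A = csm (z {}) cl_one A"
  proof (cases "A = {}")
    case True thus ?thesis by (simp add: csm_def cl_one_def)
  next
    case ne: False
    show ?thesis
    proof (cases "A \<subseteq> {..<m}")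
      case False thus ?thesis using z ne unfolding supp_def csm_def cl_one_def by auto
    next
      case True
      from ne obtain i where i: "i \<in> A" by auto
      have im: "i < m" using i True by auto
      let ?D = "sd A {i}"
      have D: "?D \<subseteq> {..<m}" using True im by auto
      have si: "{i} \<subseteq> {..<m}" using im by auto
      have sdA: "sd {i} ?D = A" by auto
      have "cl_mult m (cl_alpha z) (dl {i}) ?D = cl_mult m (dl {i}) z ?D"
        using h[of "unit_vec m i"] im by (simp add: cl_vec_unit)
      hence "cl_sign (sd {i} ?D) {i} * cl_alpha z (sd {i} ?D) = cl_sign {i} (sd {i} ?D) * z (sd {i} ?D)"
        unfolding mult_dl_right[OF si] mult_dl_left[OF si] using D by simp
      hence "cl_sign A {i} * ((-1) ^ card A * z A) = cl_sign {i} A * z A"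
        unfolding sdA cl_alpha_def by simp
      hence "((-1) ^ card A * cl_sign A {i}) * z A = cl_sign {i} A * z A" by (simp add: mult_ac)
      hence "- cl_sign {i} A * z A = cl_sign {i} A * z A"
        using sign_single[OF finite_sub[OF True] i] by simp
      moreover have "cl_sign {i} A \<noteq> 0" unfolding cl_sign_def by simp
      ultimately have "z A = 0" by simp
      thus ?thesis using ne by (simp add: csm_def cl_one_def)
    qed
  qed
qed

lemma pin_kernel:
  assumes x: "x \<in> pin m" and w: "w \<in> pin m" and eq: "pin_rho m x = pin_rho m w"
  shows "x = w \<or> x = csm (-1) w"
proof -
  let ?A = "pin_rho m x"
  have Ax: "rho_prop m x ?A" using rho_prop_rho[OF x] .
  have Aw: "rho_prop m w ?A" using rho_prop_rho[OF w] eq by simp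
  obtain w' where w': "supp m w'" "cl_mult m w w' = cl_one" "cl_mult m w' w = cl_one"
    using pin_inv[OF w] by auto
  have sw: "supp m w" "supp m x" using supp_pin w x by auto
  let ?z = "cl_mult m w' x"
  have zc: "cl_mult m (cl_alpha ?z) (cl_vec m v) = cl_mult m (cl_vec m v) ?z" if v: "v \<in> carrier_vec m" for v
  proof -
    have Av: "?A *\<^sub>v v \<in> carrier_vec m" using v rho_carrier[OF x] by auto
    have 1: "cl_mult m (cl_alpha x) (cl_vec m v) = cl_mult m (cl_vec m (?A *\<^sub>v v)) x"
      using Ax v unfolding rho_prop_def by auto
    have 2: "cl_mult m (cl_alpha w) (cl_vec m v) = cl_mult m (cl_vec m (?A *\<^sub>v v)) w"
      using Aw v unfolding rho_prop_def by auto
    have "cl_vec m (?A *\<^sub>v v) = cl_mult m (cl_mult m (cl_vec m (?A *\<^sub>v v)) w) w'"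
      by (simp add: assoc w' unit_right supp_vec)
    also have "\<dots> = cl_mult m (cl_mult m (cl_alpha w) (cl_vec m v)) w'" by (simp add: 2)
    finally have 3: "cl_vec m (?A *\<^sub>v v) = cl_mult m (cl_mult m (cl_alpha w) (cl_vec m v)) w'" .
    have "cl_mult m (cl_alpha ?z) (cl_vec m v) = cl_mult m (cl_alpha w') (cl_mult m (cl_alpha x) (cl_vec m v))"
      by (simp add: alpha_mult assoc)
    also have "\<dots> = cl_mult m (cl_mult m (cl_alpha w') (cl_alpha w)) (cl_mult m (cl_vec m v) ?z)"
      unfolding 1 by (subst 3) (simp add: assoc)
    also have "cl_mult m (cl_alpha w') (cl_alpha w) = cl_one"
      by (simp add: alpha_mult[symmetric] w' alpha_one)
    finally show ?thesis by (simp add: unit_left supp_mult)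
  qed
  have z: "?z = csm (?z {}) cl_one" by (rule twisted_central[OF supp_mult zc])
  define c where "c = ?z {}"
  have xw: "x = csm c w"
  proof -
    have "x = cl_mult m (cl_mult m w w') x" by (simp add: w' unit_left sw)
    also have "\<dots> = cl_mult m w ?z" by (simp add: assoc)
    also have "\<dots> = csm c w" by (subst z) (simp add: c_def csm_right unit_right sw)
    finally show ?thesis .
  qed
  have "cl_one = cl_mult m x (cl_bar x)" using pin_bar[OF x] by simp
  also have "\<dots> = csm (c * c) (cl_mult m w (cl_bar w))" by (simp add: xw bar_csm csm_left csm_right csm_csm)
  also have "\<dots> = csm (c * c) cl_one" using pin_bar[OF w] by simp
  finally have "cl_one {} = csm (c * c) cl_one {}" by simp
  hence "c * c = 1" by (simp add: csm_def cl_one_def)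
  hence "c = 1 \<or> c = -1" by (metis mult_cancel_left1 mult_minus1_right square_eq_iff)
  thus ?thesis using xw by (auto simp: csm_one)
qed



lemma sp_sym: "v \<in> carrier_vec m \<Longrightarrow> w \<in> carrier_vec m \<Longrightarrow> v \<bullet> w = w \<bullet> (v :: real vec)"
  by (rule comm_scalar_prod)

lemma dim_refl[simp]: "dim_row (refl_mat m u) = m" "dim_col (refl_mat m u) = m"
  unfolding refl_mat_def by auto

lemma refl_vec_carrier[simp]: "v \<in> carrier_vec m \<Longrightarrow> refl_mat m u *\<^sub>v v \<in> carrier_vec m"
  by (metis mult_mat_vec_carrier refl_mat_carrier)

lemma refl_inner:
  assumes u: "u \<in> carrier_vec m" and v: "v \<in> carrier_vec m" and w: "w \<in> carrier_vec m"
  shows "w \<bullet> (refl_mat m u *\<^sub>v v) = w \<bullet> v - 2 * (u \<bullet> v) * (w \<bullet> u)"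
proof -
  have "w \<bullet> (refl_mat m u *\<^sub>v v) = (\<Sum>j\<in>{0..<m}. w $ j * (refl_mat m u *\<^sub>v v) $ j)"
    by (simp only: scalar_prod_def dim_mult_mat_vec dim_refl)
  also have "\<dots> = (\<Sum>j\<in>{0..<m}. w $ j * v $ j - (2 * (u \<bullet> v)) * (w $ j * u $ j))"
  proof (rule sum.cong[OF refl])
    fix j assume "j \<in> {0..<m}" hence j: "j < m" by simp
    show "w $ j * (refl_mat m u *\<^sub>v v) $ j = w $ j * v $ j - (2 * (u \<bullet> v)) * (w $ j * u $ j)"
      unfolding refl_mult_vec_index[OF u v j] by (simp add: algebra_simps)
  qed
  also have "\<dots> = (\<Sum>j\<in>{0..<m}. w $ j * v $ j) - (2 * (u \<bullet> v)) * (\<Sum>j\<in>{0..<m}. w $ j * u $ j)"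
    by (simp only: sum_subtractf sum_distrib_left)
  also have "\<dots> = w \<bullet> v - 2 * (u \<bullet> v) * (w \<bullet> u)"
    using u v by (simp add: scalar_prod_def[of w v] scalar_prod_def[of w u])
  finally show ?thesis .
qed

lemma refl_refl:
  assumes u: "u \<in> carrier_vec m" and uu: "u \<bullet> u = 1"
  shows "refl_mat m u * refl_mat m u = 1\<^sub>m m"
proof (rule mat_eq_vec[of _ m])
  fix v :: "real vec" assume v: "v \<in> carrier_vec m"
  have Rv: "refl_mat m u *\<^sub>v v \<in> carrier_vec m" using v by simp
  have "(refl_mat m u * refl_mat m u) *\<^sub>v v = refl_mat m u *\<^sub>v (refl_mat m u *\<^sub>v v)"
    using v by (simp add: assoc_mult_mat_vec[of _ m m _ m])
  also have "\<dots> = v"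
  proof (rule eq_vecI)
    fix i assume "i < dim_vec v" hence i: "i < m" using v by simp
    show "(refl_mat m u *\<^sub>v (refl_mat m u *\<^sub>v v)) $ i = v $ i"
      unfolding refl_mult_vec_index[OF u Rv i] refl_mult_vec_index[OF u v i] refl_inner[OF u v u] uu
      by (simp add: algebra_simps)
  qed (use v in simp)
  finally show "(refl_mat m u * refl_mat m u) *\<^sub>v v = 1\<^sub>m m *\<^sub>v v" using v by simp
qed auto

lemma refl_transpose: "transpose_mat (refl_mat m u) = refl_mat m u"
  unfolding refl_mat_def by (rule eq_matI) (auto simp: mult.commute)

lemma orth_refl: "u \<in> carrier_vec m \<Longrightarrow> u \<bullet> u = 1 \<Longrightarrow> orth_mat m (refl_mat m u)"
  unfolding orth_mat_def by (simp add: refl_transpose refl_refl)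

lemma orth_carrier: "orth_mat m A \<Longrightarrow> A \<in> carrier_mat m m" unfolding orth_mat_def by auto

lemma orth_mult:
  assumes A: "orth_mat m A" and B: "orth_mat m B"
  shows "orth_mat m (A * B)"
proof -
  have Ac: "A \<in> carrier_mat m m" and Bc: "B \<in> carrier_mat m m" using A B orth_carrier by auto
  have "transpose_mat (A * B) * (A * B) = transpose_mat B * (transpose_mat A * A) * B"
    using Ac Bc by (simp add: transpose_mult[of A m m B m] assoc_mult_mat[of _ m m _ m _ m])
  also have "\<dots> = 1\<^sub>m m" using A B Bc unfolding orth_mat_def by simp
  finally show ?thesis using Ac Bc unfolding orth_mat_def by simp
qed

lemma orth_inner:
  assumes Q: "orth_mat m Q" and v: "v \<in> carrier_vec m" and w: "w \<in> carrier_vec m"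
  shows "(Q *\<^sub>v v) \<bullet> (Q *\<^sub>v w) = v \<bullet> w"
proof -
  have Qc: "Q \<in> carrier_mat m m" using Q orth_carrier by auto
  have "(Q *\<^sub>v v) \<bullet> (Q *\<^sub>v w) = (transpose_mat Q *\<^sub>v (Q *\<^sub>v v)) \<bullet> w"
    using Qc v w by (simp add: transpose_vec_mult_scalar[of Q m m w "Q *\<^sub>v v"])
  also have "transpose_mat Q *\<^sub>v (Q *\<^sub>v v) = (transpose_mat Q * Q) *\<^sub>v v"
    using Qc v by (simp add: assoc_mult_mat_vec[of _ m m _ m])
  also have "\<dots> = v" using Q v unfolding orth_mat_def by simp
  finally show ?thesis .
qed

lemma refl_swap:
  assumes a: "a \<in> carrier_vec m" and b: "b \<in> carrier_vec m" and aa: "a \<bullet> a = 1" and bb: "b \<bullet> b = 1"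
    and ab: "a \<noteq> b"
  shows "\<exists>w. w \<in> carrier_vec m \<and> w \<bullet> w = 1 \<and> refl_mat m w *\<^sub>v a = b \<and> (\<forall>i<m. a $ i = b $ i \<longrightarrow> w $ i = 0)"
proof -
  define d where "d = a - b"
  have d: "d \<in> carrier_vec m" using a b unfolding d_def by simp
  have di: "\<And>i. i < m \<Longrightarrow> d $ i = a $ i - b $ i" using a b unfolding d_def by simp
  have da: "d \<bullet> a = 1 - a \<bullet> b" unfolding d_def using a b aa sp_sym[OF a b]
    by (simp add: minus_scalar_prod_distrib[of a m b a])
  have dd: "d \<bullet> d = 2 - 2 * (a \<bullet> b)" unfolding d_def using a b aa bb sp_sym[OF a b]
    by (simp add: minus_scalar_prod_distrib[of a m b] scalar_prod_minus_distrib[of _ m a b])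
  have dd_sum: "d \<bullet> d = (\<Sum>i\<in>{0..<m}. d $ i * d $ i)" using d by (simp add: scalar_prod_def)
  have dpos: "d \<bullet> d > 0"
  proof -
    have ge: "d \<bullet> d \<ge> 0" unfolding dd_sum by (intro sum_nonneg) auto
    have "d \<bullet> d \<noteq> 0"
    proof
      assume "d \<bullet> d = 0"
      hence "\<forall>i\<in>{0..<m}. d $ i * d $ i = 0" unfolding dd_sum by (subst (asm) sum_nonneg_eq_0_iff) auto
      hence "\<forall>i<m. a $ i = b $ i" using di by auto
      hence "a = b" using a b by (intro eq_vecI) auto
      thus False using ab by simp
    qed
    thus ?thesis using ge by simp
  qed
  define s where "s = sqrt (d \<bullet> d)"
  have s: "s > 0" "s * s = d \<bullet> d" using dpos unfolding s_def by (auto simp: real_sqrt_mult[symmetric])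
  define w where "w = (1 / s) \<cdot>\<^sub>v d"
  have w: "w \<in> carrier_vec m" using d unfolding w_def by simp
  have wi: "\<And>i. i < m \<Longrightarrow> w $ i = d $ i / s" using d unfolding w_def by simp
  have ww: "w \<bullet> w = 1" unfolding w_def using d s dpos by (simp add: field_simps)
  have wa: "w \<bullet> a = (d \<bullet> a) / s" unfolding w_def using d a by simp
  have e: "s * s = 2 * (d \<bullet> a)" using s dd da by simp
  have nz: "2 * (d \<bullet> a) \<noteq> 0" using e s(1) by (metis mult_pos_pos less_irrefl)
  have key: "2 * (d \<bullet> a) / (s * s) = 1" using nz by (simp only: e) simp
  have "refl_mat m w *\<^sub>v a = b"
  proof (rule eq_vecI)
    fix i assume "i < dim_vec b" hence i: "i < m" using b by simp
    have "(refl_mat m w *\<^sub>v a) $ i = a $ i - (2 * (d \<bullet> a) / (s * s)) * d $ i"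
      unfolding refl_mult_vec_index[OF w a i] wa wi[OF i] by (simp add: field_simps)
    also have "\<dots> = b $ i" using di[OF i] by (simp only: key) simp
    finally show "(refl_mat m w *\<^sub>v a) $ i = b $ i" .
  qed (use a b in simp)
  moreover have "\<forall>i<m. a $ i = b $ i \<longrightarrow> w $ i = 0" using wi di by simp
  ultimately show ?thesis using w ww by blast
qed



lemma rho_prop_mult:
  assumes A: "rho_prop m x A" and B: "rho_prop m y B"
  shows "rho_prop m (cl_mult m x y) (A * B)"
  unfolding rho_prop_def
proof (intro conjI ballI)
  have Ac: "A \<in> carrier_mat m m" and Bc: "B \<in> carrier_mat m m" using A B unfolding rho_prop_def by auto
  thus "A * B \<in> carrier_mat m m" by simp
  fix v :: "real vec" assume v: "v \<in> carrier_vec m"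
  have Bv: "B *\<^sub>v v \<in> carrier_vec m" using Bc v by simp
  have "cl_mult m (cl_alpha (cl_mult m x y)) (cl_vec m v) = cl_mult m (cl_alpha x) (cl_mult m (cl_alpha y) (cl_vec m v))"
    by (simp add: alpha_mult assoc)
  also have "\<dots> = cl_mult m (cl_mult m (cl_alpha x) (cl_vec m (B *\<^sub>v v))) y"
    using B v unfolding rho_prop_def by (simp add: assoc)
  also have "\<dots> = cl_mult m (cl_vec m (A *\<^sub>v (B *\<^sub>v v))) (cl_mult m x y)"
    using A Bv unfolding rho_prop_def by (simp add: assoc)
  also have "A *\<^sub>v (B *\<^sub>v v) = (A * B) *\<^sub>v v" using Ac Bc v by (simp add: assoc_mult_mat_vec[of _ m m _ m])
  finally show "cl_mult m (cl_alpha (cl_mult m x y)) (cl_vec m v) = cl_mult m (cl_vec m ((A * B) *\<^sub>v v)) (cl_mult m x y)" .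
qed

lemma rho_mult: "x \<in> pin m \<Longrightarrow> y \<in> pin m \<Longrightarrow> pin_rho m (cl_mult m x y) = pin_rho m x * pin_rho m y"
  by (rule rho_eq) (auto intro: pin_mult rho_prop_mult rho_prop_rho)

lemma vec_pin: "u \<in> carrier_vec m \<Longrightarrow> u \<bullet> u = 1 \<Longrightarrow> cl_vec m u \<in> pin m"
  using pin.pin_step[OF pin.pin_one, of u m] by (simp add: unit_left supp_vec)

lemma rho_vec: "u \<in> carrier_vec m \<Longrightarrow> u \<bullet> u = 1 \<Longrightarrow> pin_rho m (cl_vec m u) = refl_mat m u"
  using rho_step[OF pin.pin_one, of u m] by (simp add: unit_left supp_vec rho_one)

lemma hh_step:
  assumes Q: "orth_mat m Q" and k: "k < m" and fx: "\<forall>i<k. Q *\<^sub>v unit_vec m i = unit_vec m i"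
  shows "(\<forall>i<Suc k. Q *\<^sub>v unit_vec m i = unit_vec m i) \<or>
    (\<exists>u. u \<in> carrier_vec m \<and> u \<bullet> u = 1 \<and> (\<forall>i<Suc k. (refl_mat m u * Q) *\<^sub>v unit_vec m i = unit_vec m i))"
proof -
  have Qc: "Q \<in> carrier_mat m m" using Q orth_carrier by auto
  define w where "w = Q *\<^sub>v unit_vec m k"
  have w: "w \<in> carrier_vec m" unfolding w_def using Qc by simp
  have ww: "w \<bullet> w = 1" unfolding w_def using orth_inner[OF Q, of "unit_vec m k" "unit_vec m k"] k by simp
  have w0: "w $ i = 0" if i: "i < k" for i
  proof -
    have "w $ i = w \<bullet> unit_vec m i" using i k by simp
    also have "\<dots> = (Q *\<^sub>v unit_vec m k) \<bullet> (Q *\<^sub>v unit_vec m i)" using fx i unfolding w_def by simp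
    also have "\<dots> = unit_vec m k \<bullet> unit_vec m i" using orth_inner[OF Q] i k by simp
    also have "\<dots> = 0" using i k by simp
    finally show ?thesis .
  qed
  show ?thesis
  proof (cases "w = unit_vec m k")
    case True
    hence "\<forall>i<Suc k. Q *\<^sub>v unit_vec m i = unit_vec m i" using fx unfolding w_def
      by (metis less_Suc_eq)
    thus ?thesis by blast
  next
    case False
    obtain u where u: "u \<in> carrier_vec m" "u \<bullet> u = 1" "refl_mat m u *\<^sub>v w = unit_vec m k"
      and u0: "\<forall>i<m. w $ i = unit_vec m k $ i \<longrightarrow> u $ i = 0"
      using refl_swap[OF w _ ww _ False] k by auto
    have "(refl_mat m u * Q) *\<^sub>v unit_vec m i = unit_vec m i" if i: "i < Suc k" for i
    proof -
      have "(refl_mat m u * Q) *\<^sub>v unit_vec m i = refl_mat m u *\<^sub>v (Q *\<^sub>v unit_vec m i)"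
        using Qc by (simp add: assoc_mult_mat_vec[of _ m m _ m])
      also have "\<dots> = unit_vec m i"
      proof (cases "i = k")
        case True thus ?thesis using u unfolding w_def by simp
      next
        case False
        hence ik: "i < k" using i by simp
        have ui: "u $ i = 0" using u0 w0[OF ik] ik k by simp
        have "refl_mat m u *\<^sub>v unit_vec m i = unit_vec m i"
        proof (rule eq_vecI)
          fix j assume "j < dim_vec (unit_vec m i :: real vec)" hence j: "j < m" by simp
          show "(refl_mat m u *\<^sub>v unit_vec m i) $ j = unit_vec m i $ j"
            unfolding refl_mult_vec_index[OF u(1) unit_vec_carrier j] using ui ik k u(1) by simp
        qed simp
        thus ?thesis using fx ik by simp
      qed
      finally show ?thesis .
    qed
    thus ?thesis using u by blast
  qed
qed

lemma hh: "k \<le> m \<Longrightarrow> orth_mat m Q \<Longrightarrow> (\<forall>i<k. Q *\<^sub>v unit_vec m i = unit_vec m i) \<Longrightarrow> \<exists>x\<in>pin m. pin_rho m x = Q"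
proof (induction "m - k" arbitrary: k Q)
  case 0
  hence km: "k = m" by simp
  have Qc: "Q \<in> carrier_mat m m" using 0 orth_carrier by auto
  have "Q = 1\<^sub>m m"
  proof (rule eq_matI)
    fix i j assume i: "i < dim_row (1\<^sub>m m :: real mat)" and j: "j < dim_col (1\<^sub>m m :: real mat)"
    have "Q $$ (i, j) = (Q *\<^sub>v unit_vec m j) $ i" using Qc i j by simp
    also have "\<dots> = unit_vec m j $ i" using 0(4) km j by simp
    finally show "Q $$ (i, j) = 1\<^sub>m m $$ (i, j)" using i j by simp
  qed (use Qc in auto)
  thus ?case using rho_one pin.pin_one by blast
next
  case (Suc n)
  hence k: "k < m" by simp
  from hh_step[OF Suc(4) k Suc(5)] show ?case
  proof
    assume "\<forall>i<Suc k. Q *\<^sub>v unit_vec m i = unit_vec m i"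
    thus ?thesis using Suc(1)[of "Suc k" Q] Suc(2) Suc(4) k by simp
  next
    assume "\<exists>u. u \<in> carrier_vec m \<and> u \<bullet> u = 1 \<and> (\<forall>i<Suc k. (refl_mat m u * Q) *\<^sub>v unit_vec m i = unit_vec m i)"
    then obtain u where u: "u \<in> carrier_vec m" "u \<bullet> u = 1"
      and fx: "\<forall>i<Suc k. (refl_mat m u * Q) *\<^sub>v unit_vec m i = unit_vec m i" by auto
    have o: "orth_mat m (refl_mat m u * Q)" using orth_mult[OF orth_refl[OF u] Suc(4)] .
    have n: "n = m - Suc k" using Suc(2) by arith
    have "\<exists>x\<in>pin m. pin_rho m x = refl_mat m u * Q" using Suc(1)[OF n _ o fx] k by simp
    then obtain x' where x': "x' \<in> pin m" "pin_rho m x' = refl_mat m u * Q" by auto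
    have Qc: "Q \<in> carrier_mat m m" using Suc(4) orth_carrier by auto
    have "cl_mult m (cl_vec m u) x' \<in> pin m" using pin_mult[OF x'(1) vec_pin[OF u]] .
    moreover have "pin_rho m (cl_mult m (cl_vec m u) x') = Q"
    proof -
      have "pin_rho m (cl_mult m (cl_vec m u) x') = refl_mat m u * (refl_mat m u * Q)"
        using rho_mult[OF vec_pin[OF u] x'(1)] rho_vec[OF u] x'(2) by simp
      also have "\<dots> = (refl_mat m u * refl_mat m u) * Q" using Qc by (simp add: assoc_mult_mat[of _ m m _ m _ m])
      also have "\<dots> = Q" using refl_refl[OF u] Qc by simp
      finally show ?thesis .
    qed
    ultimately show ?thesis by blast
  qed
qed

lemma householder: "orth_mat m Q \<Longrightarrow> \<exists>x\<in>pin m. pin_rho m x = Q"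
  using hh[of 0 m Q] by simp



lemma prod_list_sign: "prod_list (map (\<lambda>i. if i = 0 then -1 else 1) [0..<Suc n]) = (-1::real)"
  by (induction n) auto

lemma det_refl_e0:
  assumes m: "0 < m"
  shows "det (refl_mat m (unit_vec m 0)) = -1"
proof -
  let ?R = "refl_mat m (unit_vec m 0) :: real mat"
  have ut: "upper_triangular ?R" unfolding upper_triangular_def refl_mat_def by auto
  have "det ?R = prod_list (diag_mat ?R)" by (rule det_upper_triangular[OF ut refl_mat_carrier])
  also have "diag_mat ?R = map (\<lambda>i. if i = 0 then -1 else 1) [0..<m]"
    unfolding diag_mat_def refl_mat_def using m by (auto simp: map_eq_conv)
  also have "prod_list \<dots> = -1" using prod_list_sign[of "m - 1"] m by simp
  finally show ?thesis .
qed

lemma wew: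
  assumes w: "w \<in> carrier_vec m" "w \<bullet> w = 1" and e: "e \<in> carrier_vec m"
    and u: "u \<in> carrier_vec m" and we: "refl_mat m w *\<^sub>v e = u"
  shows "cl_mult m (cl_mult m (cl_vec m w) (cl_vec m e)) (cl_vec m w) = cl_vec m u"
proof -
  have "cl_mult m (cl_alpha (cl_vec m w)) (cl_vec m e) = cl_mult m (cl_vec m u) (cl_vec m w)"
    using alpha_u_v[OF w e] we by simp
  hence "csm (-1) (cl_mult m (cl_vec m w) (cl_vec m e)) = cl_mult m (cl_vec m u) (cl_vec m w)"
    by (simp add: alpha_vec csm_left)
  hence "cl_mult m (csm (-1) (cl_mult m (cl_vec m w) (cl_vec m e))) (cl_vec m w) = cl_mult m (cl_mult m (cl_vec m u) (cl_vec m w)) (cl_vec m w)"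
    by simp
  hence "csm (-1) (cl_mult m (cl_mult m (cl_vec m w) (cl_vec m e)) (cl_vec m w)) = csm (-1) (cl_vec m u)"
    by (simp add: csm_left assoc vec_unit_sq[OF w] csm_right unit_right supp_vec)
  hence "csm (-1) (csm (-1) (cl_mult m (cl_mult m (cl_vec m w) (cl_vec m e)) (cl_vec m w))) = csm (-1) (csm (-1) (cl_vec m u))"
    by simp
  thus ?thesis by (simp add: csm_csm csm_one)
qed

lemma det_refl:
  assumes u: "u \<in> carrier_vec m" "u \<bullet> u = 1"
  shows "det (refl_mat m u) = -1"
proof -
  have m: "0 < m"
  proof (rule ccontr)
    assume "\<not> 0 < m" hence "m = 0" by simp
    hence "u \<bullet> u = 0" using u by (simp add: scalar_prod_def)
    thus False using u by simp
  qed
  let ?e = "unit_vec m 0 :: real vec"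
  have e: "?e \<in> carrier_vec m" "?e \<bullet> ?e = 1" using m by auto
  show ?thesis
  proof (cases "u = ?e")
    case True thus ?thesis using det_refl_e0[OF m] by simp
  next
    case False
    obtain w where w: "w \<in> carrier_vec m" "w \<bullet> w = 1" "refl_mat m w *\<^sub>v ?e = u"
      using refl_swap[OF e(1) u(1) e(2) u(2)] False by auto
    have "refl_mat m u = pin_rho m (cl_vec m u)" using rho_vec[OF u] by simp
    also have "cl_vec m u = cl_mult m (cl_mult m (cl_vec m w) (cl_vec m ?e)) (cl_vec m w)"
      using wew[OF w(1,2) e(1) u(1) w(3)] by simp
    also have "pin_rho m \<dots> = refl_mat m w * refl_mat m ?e * refl_mat m w"
      using rho_mult vec_pin pin_mult rho_vec w e by simp
    finally have eq: "refl_mat m u = refl_mat m w * refl_mat m ?e * refl_mat m w" .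
    have "det (refl_mat m w * refl_mat m w) = 1" using refl_refl[OF w(1,2)] by simp
    hence ww: "det (refl_mat m w) * det (refl_mat m w) = 1"
      by (simp add: det_mult[of _ m])
    have "det (refl_mat m u) = det (refl_mat m w) * det (refl_mat m ?e) * det (refl_mat m w)"
    proof -
      have c: "refl_mat m w * refl_mat m ?e \<in> carrier_mat m m" by (rule mult_carrier_mat) auto
      show ?thesis unfolding eq det_mult[OF c refl_mat_carrier] det_mult[OF refl_mat_carrier refl_mat_carrier] ..
    qed
    also have "\<dots> = det (refl_mat m ?e)" using ww by (simp add: algebra_simps)
    finally show ?thesis using det_refl_e0[OF m] by simp
  qed
qed

lemma alpha_det: "x \<in> pin m \<Longrightarrow> cl_alpha x = csm (det (pin_rho m x)) x"
proof (induction rule: pin.induct)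
  case pin_one thus ?case by (simp add: rho_one alpha_one csm_one)
next
  case (pin_step x v)
  have "cl_alpha (cl_mult m x (cl_vec m v)) = csm (det (pin_rho m x) * -1) (cl_mult m x (cl_vec m v))"
    using pin_step by (simp add: alpha_mult alpha_vec csm_left csm_right csm_csm)
  also have "det (pin_rho m x) * -1 = det (pin_rho m (cl_mult m x (cl_vec m v)))"
    using pin_step rho_step rho_carrier det_refl by (simp add: det_mult[of _ m])
  finally show ?case .
qed

lemma orth_det: "orth_mat m A \<Longrightarrow> det A = 1 \<or> det A = -1"
proof -
  assume A: "orth_mat m A"
  have Ac: "A \<in> carrier_mat m m" using A orth_carrier by auto
  have "det (transpose_mat A * A) = 1" using A unfolding orth_mat_def by simp
  hence "det A * det A = 1" using Ac by (simp add: det_mult[of _ m] det_transpose)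
  thus ?thesis by (metis mult_cancel_left1 mult_minus1_right square_eq_iff)
qed



definition ext :: "nat \<Rightarrow> real vec \<Rightarrow> real vec" where
  "ext n v = vec (Suc n) (\<lambda>i. if i < n then v $ i else 0)"
definition blk :: "nat \<Rightarrow> real mat \<Rightarrow> real \<Rightarrow> real mat" where
  "blk n A d = four_block_mat A (0\<^sub>m n 1) (0\<^sub>m 1 n) (mat 1 1 (\<lambda>_. d))"

lemma supp_Suc: "supp n x \<Longrightarrow> supp (Suc n) x"
  unfolding supp_def
proof (intro allI impI)
  fix A assume h: "\<forall>A. \<not> A \<subseteq> {..<n} \<longrightarrow> x A = 0" and A: "\<not> A \<subseteq> {..<Suc n}"
  have "\<not> A \<subseteq> {..<n}" using A by auto
  thus "x A = 0" using h by simp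
qed

lemma mult_Suc:
  assumes x: "supp n x" and y: "supp n y"
  shows "cl_mult (Suc n) x y = cl_mult n x y"
proof (rule ext)
  fix C
  let ?f = "\<lambda>A. cl_sign A (sd A C) * x A * y (sd A C)"
  show "cl_mult (Suc n) x y C = cl_mult n x y C"
  proof (cases "C \<subseteq> {..<n}")
    case True
    have "(\<Sum>A\<in>Pow {..<Suc n}. ?f A) = (\<Sum>A\<in>Pow {..<n}. ?f A)"
      by (rule sum.mono_neutral_right) (use x in \<open>auto simp: supp_def\<close>)
    moreover have "C \<subseteq> {..<Suc n}" using True by auto
    ultimately show ?thesis using True by (simp add: mult_eq)
  next
    case False
    have "(\<Sum>A\<in>Pow {..<Suc n}. ?f A) = 0"
    proof (rule sum.neutral, rule ballI)
      fix A assume "A \<in> Pow {..<Suc n}"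
      show "?f A = 0"
      proof (cases "A \<subseteq> {..<n}")
        case True
        hence "\<not> sd A C \<subseteq> {..<n}" using False by blast
        thus ?thesis using y unfolding supp_def by simp
      next
        case False thus ?thesis using x unfolding supp_def by simp
      qed
    qed
    thus ?thesis using False by (simp add: mult_eq)
  qed
qed

lemma ext_carrier: "ext n v \<in> carrier_vec (Suc n)" unfolding ext_def by simp

lemma cl_vec_ext: "cl_vec (Suc n) (ext n v) = cl_vec n v"
  unfolding cl_vec_def ext_def by (rule ext) (auto simp: less_Suc_eq)

lemma ext_inner: "v \<in> carrier_vec n \<Longrightarrow> ext n v \<bullet> ext n v = v \<bullet> v"
  unfolding ext_def scalar_prod_def by simp

lemma blk_carrier: "A \<in> carrier_mat n n \<Longrightarrow> blk n A d \<in> carrier_mat (Suc n) (Suc n)"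
  unfolding blk_def using four_block_carrier_mat[of A n n "mat 1 1 (\<lambda>_. d)" 1 1] by simp

lemma blk_one: "blk n (1\<^sub>m n) 1 = 1\<^sub>m (Suc n)"
  unfolding blk_def by (rule eq_matI) auto

lemma refl_ext: "v \<in> carrier_vec n \<Longrightarrow> refl_mat (Suc n) (ext n v) = blk n (refl_mat n v) 1"
  unfolding blk_def refl_mat_def ext_def by (rule eq_matI) auto

lemma refl_en: "refl_mat (Suc n) (unit_vec (Suc n) n) = blk n (1\<^sub>m n) (-1)"
  unfolding blk_def refl_mat_def by (rule eq_matI) auto

lemma blk_mult:
  assumes A: "A \<in> carrier_mat n n" and B: "B \<in> carrier_mat n n"
  shows "blk n A a * blk n B b = blk n (A * B) (a * b)"
proof -
  have z1: "(0\<^sub>m n 1 :: real mat) \<in> carrier_mat n 1" and z2: "(0\<^sub>m 1 n :: real mat) \<in> carrier_mat 1 n"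
    and d1: "mat 1 1 (\<lambda>_. a) \<in> carrier_mat 1 1" and d2: "mat 1 1 (\<lambda>_. b) \<in> carrier_mat 1 1" by auto
  show ?thesis unfolding blk_def mult_four_block_mat[OF A z1 z2 d1 B z1 z2 d2]
    using A B by (intro cong_four_block_mat eq_matI) (auto simp: scalar_prod_def)
qed

lemma pin_embed: "x \<in> pin n \<Longrightarrow> x \<in> pin (Suc n) \<and> pin_rho (Suc n) x = blk n (pin_rho n x) 1"
proof (induction rule: pin.induct)
  case pin_one thus ?case by (simp add: pin.pin_one rho_one blk_one)
next
  case (pin_step x v)
  have ev: "ext n v \<in> carrier_vec (Suc n)" "ext n v \<bullet> ext n v = 1" using pin_step ext_carrier ext_inner by auto
  have eq: "cl_mult n x (cl_vec n v) = cl_mult (Suc n) x (cl_vec (Suc n) (ext n v))"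
    using supp_pin[OF pin_step(1)] by (simp add: cl_vec_ext mult_Suc supp_vec)
  have m: "cl_mult n x (cl_vec n v) \<in> pin (Suc n)" unfolding eq using pin_step ev by (intro pin.pin_step) auto
  have "pin_rho (Suc n) (cl_mult n x (cl_vec n v)) = pin_rho (Suc n) (cl_mult (Suc n) x (cl_vec (Suc n) (ext n v)))"
    by (simp only: eq)
  also have "\<dots> = blk n (pin_rho n x) 1 * blk n (refl_mat n v) 1"
    using rho_step[of x "Suc n" "ext n v"] pin_step ev by (simp add: refl_ext)
  also have "\<dots> = blk n (pin_rho n (cl_mult n x (cl_vec n v))) 1"
    using pin_step by (simp add: blk_mult rho_carrier rho_step)
  finally show ?case using m by simp
qed



lemma sign_n_left:
  assumes B: "B \<subseteq> {..<n}"
  shows "cl_sign {n} B = (-1) ^ card B"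
proof -
  have e: "{(a, b). a \<in> {n} \<and> b \<in> B \<and> b < a} = (\<lambda>b. (n, b)) ` B" using B by auto
  have c: "card {(a, b). a \<in> {n} \<and> b \<in> B \<and> b < a} = card B"
    unfolding e by (rule card_image) (auto simp: inj_on_def)
  have i: "{n} \<inter> B = {}" using B by auto
  show ?thesis unfolding cl_sign_def c i by simp
qed

lemma sign_n_right:
  assumes B: "B \<subseteq> {..<n}"
  shows "cl_sign B {n} = 1"
proof -
  have e: "{(a, b). a \<in> B \<and> b \<in> {n} \<and> b < a} = {}" using B by auto
  have i: "B \<inter> {n} = {}" using B by auto
  show ?thesis unfolding cl_sign_def e i by simp
qed

abbreviation En :: "nat \<Rightarrow> cl" where "En n \<equiv> cl_vec (Suc n) (unit_vec (Suc n) n)"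

lemma En_dl: "En n = dl {n}" by (rule cl_vec_unit) simp

lemma En_comm:
  assumes x: "supp n x"
  shows "cl_mult (Suc n) (En n) x = cl_mult (Suc n) (cl_alpha x) (En n)"
proof (rule ext)
  fix C
  have s: "{n} \<subseteq> {..<Suc n}" by auto
  let ?B = "sd {n} C"
  have "cl_sign {n} ?B * x ?B = cl_sign ?B {n} * cl_alpha x ?B"
  proof (cases "?B \<subseteq> {..<n}")
    case True thus ?thesis by (simp add: sign_n_left sign_n_right cl_alpha_def)
  next
    case False thus ?thesis using x unfolding supp_def cl_alpha_def by simp
  qed
  thus "cl_mult (Suc n) (En n) x C = cl_mult (Suc n) (cl_alpha x) (En n) C"
    unfolding En_dl mult_dl_left[OF s] mult_dl_right[OF s] by simp
qed

lemma En_sq: "cl_mult (Suc n) (En n) (En n) = csm (-1) cl_one"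
  by (rule vec_unit_sq) (auto simp: scalar_prod_left_unit)

definition lift :: "nat \<Rightarrow> cl \<Rightarrow> real \<Rightarrow> cl" where
  "lift n x d = (if d = -1 then cl_mult (Suc n) x (En n) else x)"

lemma lift_pin:
  assumes x: "x \<in> pin n" and d: "d = 1 \<or> d = -1"
  shows "lift n x d \<in> pin (Suc n) \<and> pin_rho (Suc n) (lift n x d) = blk n (pin_rho n x) d"
proof (cases "d = -1")
  case False
  hence "d = 1" using d by simp
  thus ?thesis using pin_embed[OF x] unfolding lift_def by simp
next
  case True
  have e: "unit_vec (Suc n) n \<in> carrier_vec (Suc n)" "unit_vec (Suc n) n \<bullet> unit_vec (Suc n) n = (1::real)"
    by (auto simp: scalar_prod_left_unit)
  have xS: "x \<in> pin (Suc n)" "pin_rho (Suc n) x = blk n (pin_rho n x) 1" using pin_embed[OF x] by auto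
  have "lift n x d \<in> pin (Suc n)" using True xS e unfolding lift_def by (simp add: pin.pin_step)
  moreover have "pin_rho (Suc n) (lift n x d) = blk n (pin_rho n x) d"
    using True xS e rho_step[OF xS(1) e] refl_en blk_mult[OF rho_carrier[OF x] one_carrier_mat, of 1 "-1"]
    unfolding lift_def by (simp add: rho_carrier[OF x] right_mult_one_mat[OF rho_carrier[OF x]])
  ultimately show ?thesis by simp
qed

lemma lift_csm: "lift n (csm c x) d = csm c (lift n x d)"
  unfolding lift_def by (simp add: csm_left)

lemma lift_mult:
  assumes x: "supp n x" and y: "supp n y" and dx: "dx = 1 \<or> dx = -1" and dy: "dy = 1 \<or> dy = -1"
    and ay: "cl_alpha y = csm dy y"
  shows "cl_mult (Suc n) (lift n x dx) (lift n y dy) = lift n (cl_mult n x y) (dx * dy)"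
proof -
  have xS: "supp (Suc n) x" and yS: "supp (Suc n) y" using supp_Suc x y by auto
  have xy: "cl_mult (Suc n) x y = cl_mult n x y" by (rule mult_Suc[OF x y])
  have Ey: "cl_mult (Suc n) (En n) y = csm dy (cl_mult (Suc n) y (En n))"
    using En_comm[OF y] ay by (simp add: csm_left)
  show ?thesis
  proof (cases "dx = -1")
    case dxm: True
    show ?thesis
    proof (cases "dy = -1")
      case True
      have "cl_mult (Suc n) (cl_mult (Suc n) x (En n)) (cl_mult (Suc n) y (En n))
          = cl_mult (Suc n) x (cl_mult (Suc n) (cl_mult (Suc n) (En n) y) (En n))" by (simp add: assoc)
      also have "\<dots> = cl_mult (Suc n) x y"
        using True by (simp add: Ey csm_left csm_right assoc En_sq csm_csm csm_one unit_right yS)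
      finally show ?thesis using dxm True xy unfolding lift_def by simp
    next
      case False
      hence "dy = 1" using dy by simp
      hence "cl_mult (Suc n) (cl_mult (Suc n) x (En n)) y = cl_mult (Suc n) (cl_mult (Suc n) x y) (En n)"
        using Ey by (simp add: assoc csm_one)
      thus ?thesis using dxm \<open>dy = 1\<close> xy unfolding lift_def by simp
    qed
  next
    case False
    hence "dx = 1" using dx by simp
    thus ?thesis using xy unfolding lift_def by (auto simp: assoc[symmetric])
  qed
qed

lemma lift_inj:
  assumes a: "supp n a" and b: "supp n b" and eq: "lift n a d = lift n b d"
  shows "a = b"
proof (cases "d = -1")
  case True
  have "cl_mult (Suc n) (cl_mult (Suc n) a (En n)) (En n) = cl_mult (Suc n) (cl_mult (Suc n) b (En n)) (En n)"
    using eq True unfolding lift_def by simp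
  hence "csm (-1) a = csm (-1) b" using supp_Suc[OF a] supp_Suc[OF b]
    by (simp add: assoc En_sq csm_right unit_right)
  hence "csm (-1) (csm (-1) a) = csm (-1) (csm (-1) b)" by simp
  thus ?thesis by (simp add: csm_csm csm_one)
next
  case False thus ?thesis using eq unfolding lift_def by simp
qed



theorem lemma6p2:
  fixes G :: "('g, 'b) monoid_scheme" and n :: nat and \<pi> :: "'g \<Rightarrow> real mat"
  assumes "group G" and "finite (carrier G)" and "orth_rep G n \<pi>"
  shows "spinorial G n \<pi> \<longleftrightarrow> spinorial G (Suc n) (det_sum n \<pi>)"
proof -
  have orth: "\<And>g. g \<in> carrier G \<Longrightarrow> orth_mat n (\<pi> g)" using assms(3) unfolding orth_rep_def by auto
  have hom: "\<And>g h. g \<in> carrier G \<Longrightarrow> h \<in> carrier G \<Longrightarrow> \<pi> (g \<otimes>\<^bsub>G\<^esub> h) = \<pi> g * \<pi> h"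
    using assms(3) unfolding orth_rep_def by auto
  have clo: "\<And>g h. g \<in> carrier G \<Longrightarrow> h \<in> carrier G \<Longrightarrow> g \<otimes>\<^bsub>G\<^esub> h \<in> carrier G"
    using assms(1) by (simp add: group.is_monoid monoid.m_closed)
  have dsum: "\<And>g. det_sum n \<pi> g = blk n (\<pi> g) (det (\<pi> g))" unfolding det_sum_def blk_def by simp
  have dpm: "\<And>g. g \<in> carrier G \<Longrightarrow> det (\<pi> g) = 1 \<or> det (\<pi> g) = -1" using orth orth_det by blast
  have dhom: "\<And>g h. g \<in> carrier G \<Longrightarrow> h \<in> carrier G \<Longrightarrow> det (\<pi> (g \<otimes>\<^bsub>G\<^esub> h)) = det (\<pi> g) * det (\<pi> h)"
    using hom orth orth_carrier by (simp add: det_mult[of _ n])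
  show ?thesis
  proof
    assume "spinorial G n \<pi>"
    then obtain ph where ph1: "\<And>g. g \<in> carrier G \<Longrightarrow> ph g \<in> pin n \<and> pin_rho n (ph g) = \<pi> g"
      and ph2: "\<And>g h. g \<in> carrier G \<Longrightarrow> h \<in> carrier G \<Longrightarrow> ph (g \<otimes>\<^bsub>G\<^esub> h) = cl_mult n (ph g) (ph h)"
      unfolding spinorial_def by blast
    define ph' where "ph' g = lift n (ph g) (det (\<pi> g))" for g
    show "spinorial G (Suc n) (det_sum n \<pi>)"
      unfolding spinorial_def
    proof (intro exI[of _ ph'] conjI ballI)
      fix g assume g: "g \<in> carrier G"
      show "ph' g \<in> pin (Suc n)" "pin_rho (Suc n) (ph' g) = det_sum n \<pi> g"
        using lift_pin[of "ph g" n "det (\<pi> g)"] ph1[OF g] dpm[OF g] unfolding ph'_def dsum by auto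
    next
      fix g h assume g: "g \<in> carrier G" and h: "h \<in> carrier G"
      have ay: "cl_alpha (ph h) = csm (det (\<pi> h)) (ph h)" using alpha_det ph1[OF h] by metis
      show "ph' (g \<otimes>\<^bsub>G\<^esub> h) = cl_mult (Suc n) (ph' g) (ph' h)"
        unfolding ph'_def ph2[OF g h] dhom[OF g h]
        by (rule lift_mult[symmetric]) (use ph1[OF g] ph1[OF h] supp_pin dpm[OF g] dpm[OF h] ay in auto)
    qed
  next
    assume "spinorial G (Suc n) (det_sum n \<pi>)"
    then obtain ph' where ph1: "\<And>g. g \<in> carrier G \<Longrightarrow> ph' g \<in> pin (Suc n) \<and> pin_rho (Suc n) (ph' g) = det_sum n \<pi> g"
      and ph2: "\<And>g h. g \<in> carrier G \<Longrightarrow> h \<in> carrier G \<Longrightarrow> ph' (g \<otimes>\<^bsub>G\<^esub> h) = cl_mult (Suc n) (ph' g) (ph' h)"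
      unfolding spinorial_def by blast
    show "spinorial G n \<pi>"
    proof (cases "n = 0")
      case True
      show ?thesis unfolding spinorial_def
      proof (intro exI[of _ "\<lambda>_. cl_one"] conjI ballI)
        fix g assume g: "g \<in> carrier G"
        show "cl_one \<in> pin n" by (rule pin.pin_one)
        have "\<pi> g \<in> carrier_mat 0 0" using orth[OF g] orth_carrier True by auto
        hence "\<pi> g = 1\<^sub>m 0" by (intro eq_matI) auto
        thus "pin_rho n cl_one = \<pi> g" using True by (simp add: rho_one)
      next
        fix g h
        show "cl_one = cl_mult n cl_one cl_one" by (simp add: unit_left supp_one)
      qed
    next
      case False
      hence npos: "0 < n" by simp
      define X where "X g = (SOME x. x \<in> pin n \<and> pin_rho n x = \<pi> g)" for g
      have X: "X g \<in> pin n \<and> pin_rho n (X g) = \<pi> g" if g: "g \<in> carrier G" for g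
      proof -
        have ex: "\<exists>x. x \<in> pin n \<and> pin_rho n x = \<pi> g" using householder[OF orth[OF g]] by auto
        show ?thesis unfolding X_def by (rule someI_ex[OF ex])
      qed
      define sg where "sg g = (if ph' g = lift n (X g) (det (\<pi> g)) then 1 else (-1::real))" for g
      define ph where "ph g = csm (sg g) (X g)" for g
      have ph: "ph g \<in> pin n \<and> pin_rho n (ph g) = \<pi> g \<and> ph' g = lift n (ph g) (det (\<pi> g))"
        if g: "g \<in> carrier G" for g
      proof -
        have W: "lift n (X g) (det (\<pi> g)) \<in> pin (Suc n)"
            "pin_rho (Suc n) (lift n (X g) (det (\<pi> g))) = pin_rho (Suc n) (ph' g)"
          using lift_pin[of "X g" n "det (\<pi> g)"] X[OF g] dpm[OF g] ph1[OF g] dsum by auto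
        have k: "ph' g = lift n (X g) (det (\<pi> g)) \<or> ph' g = csm (-1) (lift n (X g) (det (\<pi> g)))"
          using pin_kernel[OF conjunct1[OF ph1[OF g]] W(1) W(2)[symmetric]] .
        show ?thesis
        proof (cases "ph' g = lift n (X g) (det (\<pi> g))")
          case True
          thus ?thesis using X[OF g] unfolding ph_def sg_def by (simp add: csm_one)
        next
          case False
          hence "ph' g = csm (-1) (lift n (X g) (det (\<pi> g)))" using k by simp
          thus ?thesis using X[OF g] False pin_neg[OF _ npos] rho_neg[OF _ npos]
            unfolding ph_def sg_def by (simp add: lift_csm)
        qed
      qed
      show ?thesis unfolding spinorial_def
      proof (intro exI[of _ ph] conjI ballI)
        fix g assume g: "g \<in> carrier G"
        show "ph g \<in> pin n" "pin_rho n (ph g) = \<pi> g" using ph[OF g] by auto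
      next
        fix g h assume g: "g \<in> carrier G" and h: "h \<in> carrier G"
        have gh: "g \<otimes>\<^bsub>G\<^esub> h \<in> carrier G" using clo g h .
        have ay: "cl_alpha (ph h) = csm (det (\<pi> h)) (ph h)" using alpha_det ph[OF h] by metis
        have "lift n (ph (g \<otimes>\<^bsub>G\<^esub> h)) (det (\<pi> g) * det (\<pi> h)) = ph' (g \<otimes>\<^bsub>G\<^esub> h)"
          using ph[OF gh] dhom[OF g h] by simp
        also have "\<dots> = cl_mult (Suc n) (ph' g) (ph' h)" by (rule ph2[OF g h])
        also have "\<dots> = lift n (cl_mult n (ph g) (ph h)) (det (\<pi> g) * det (\<pi> h))"
          using ph[OF g] ph[OF h] by (simp add: lift_mult supp_pin dpm[OF g] dpm[OF h] ay)
        finally have eq: "lift n (ph (g \<otimes>\<^bsub>G\<^esub> h)) (det (\<pi> g) * det (\<pi> h)) =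
            lift n (cl_mult n (ph g) (ph h)) (det (\<pi> g) * det (\<pi> h))" .
        have sp: "supp n (ph (g \<otimes>\<^bsub>G\<^esub> h))" using ph[OF gh] supp_pin by blast
        show "ph (g \<otimes>\<^bsub>G\<^esub> h) = cl_mult n (ph g) (ph h)"
          by (rule lift_inj[OF sp supp_mult eq])
      qed
    qed
  qed
qed


end
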